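(* The maps $\partial_H$ and $[\ ,\ ]$ are trivial on homology $H_*(\mathcal G,\partial_E)$.
   Context: $Q$ is a mated species based on sets and $\mathcal G$ is its graph complex: spanned over $\mathbb Q$ by oriented $Q$-graphs (vertices carry $Q$-structures on incident half-edges), modulo orientation reversal giving a sign and isomorphism. $\partial_E$ sums over contractions of non-loop edges; $\partial_H$ sums over contractions of quasi-edges (pairs of distinct half-edges at distinct vertices) that are not edges; they satisfy $\partial_E^2=\partial_H^2=0$ and $\partial_E\partial_H=-\partial_H\partial_E$, so $\partial_H$ induces a map on $H_*(\mathcal G,\partial_E)$. $\mu$ is the product given by disjoint union of graphs, with $\partial_E\mu=\mu\partial_E$. The bracket $[\ ,\ ]:\mathcal G\otimes\mathcal G\to\mathcal G$ is $[\ ,\ ]=\partial_H\mu-\mu\partial_H$; it satisfies $\partial_E[\ ,\ ]=-[\ ,\ ]\partial_E$ and so induces a map $H_*(\mathcal G,\partial_E)\otimes H_*(\mathcal G,\partial_E)\to H_*(\mathcal G,\partial_E)$. *)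

theory Defs
  imports Complex_Main "HOL-Combinatorics.Permutations" "HOL-Library.Function_Algebras"
begin

text \<open>A species Q is given by, for every finite label set S, a set Qs S of
Q-structures on S, together with transport of structures along injections.
Finite sets of labels are taken inside nat; every finite set is in bijection
with such a set, so nothing is lost.  A mating combines a structure on S with
a chosen point a and a structure on a disjoint T with chosen point b into a
structure on (S - a) union (T - b); it is what is used to contract an edge or
quasi-edge joining the half-edges a and b.\<close>

record 'q species =
  Qs   :: "nat set \<Rightarrow> 'q set"
  tr   :: "(nat \<Rightarrow> nat) \<Rightarrow> 'q \<Rightarrow> 'q"
  mate :: "nat \<Rightarrow> 'q \<Rightarrow> nat \<Rightarrow> 'q \<Rightarrow> 'q"

definition species :: "'q species \<Rightarrow> bool" where
  "species Q \<longleftrightarrow>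
     (\<forall>S f x. finite S \<longrightarrow> inj_on f S \<longrightarrow> x \<in> Qs Q S \<longrightarrow> tr Q f x \<in> Qs Q (f ` S)) \<and>
     (\<forall>S x. x \<in> Qs Q S \<longrightarrow> tr Q id x = x) \<and>
     (\<forall>S f g x. finite S \<longrightarrow> inj_on f S \<longrightarrow> inj_on g (f ` S) \<longrightarrow> x \<in> Qs Q S \<longrightarrow>
        tr Q (g \<circ> f) x = tr Q g (tr Q f x)) \<and>
     (\<forall>S f g x. x \<in> Qs Q S \<longrightarrow> (\<forall>s\<in>S. f s = g s) \<longrightarrow> tr Q f x = tr Q g x)"

definition mated_species :: "'q species \<Rightarrow> bool" where
  "mated_species Q \<longleftrightarrow> species Q \<and>
     \<comment> \<open>typing of the mating\<close>
     (\<forall>S T a b x y. finite S \<longrightarrow> finite T \<longrightarrow> S \<inter> T = {} \<longrightarrow> a \<in> S \<longrightarrow> b \<in> T \<longrightarrow>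
        x \<in> Qs Q S \<longrightarrow> y \<in> Qs Q T \<longrightarrow> mate Q a x b y \<in> Qs Q ((S - {a}) \<union> (T - {b}))) \<and>
     \<comment> \<open>equivariance\<close>
     (\<forall>S T a b x y f. finite S \<longrightarrow> finite T \<longrightarrow> S \<inter> T = {} \<longrightarrow> a \<in> S \<longrightarrow> b \<in> T \<longrightarrow>
        x \<in> Qs Q S \<longrightarrow> y \<in> Qs Q T \<longrightarrow> inj_on f (S \<union> T) \<longrightarrow>
        tr Q f (mate Q a x b y) = mate Q (f a) (tr Q f x) (f b) (tr Q f y)) \<and>
     \<comment> \<open>commutativity\<close>
     (\<forall>S T a b x y. finite S \<longrightarrow> finite T \<longrightarrow> S \<inter> T = {} \<longrightarrow> a \<in> S \<longrightarrow> b \<in> T \<longrightarrow>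
        x \<in> Qs Q S \<longrightarrow> y \<in> Qs Q T \<longrightarrow> mate Q a x b y = mate Q b y a x) \<and>
     \<comment> \<open>associativity\<close>
     (\<forall>S T U a b c d x y z. finite S \<longrightarrow> finite T \<longrightarrow> finite U \<longrightarrow>
        S \<inter> T = {} \<longrightarrow> S \<inter> U = {} \<longrightarrow> T \<inter> U = {} \<longrightarrow>
        a \<in> S \<longrightarrow> b \<in> T \<longrightarrow> c \<in> T \<longrightarrow> c \<noteq> b \<longrightarrow> d \<in> U \<longrightarrow>
        x \<in> Qs Q S \<longrightarrow> y \<in> Qs Q T \<longrightarrow> z \<in> Qs Q U \<longrightarrow>
        mate Q c (mate Q a x b y) d z = mate Q a x b (mate Q c y d z))"

text \<open>An oriented Q-graph is represented with vertex set {0..<nv} and half-edge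
set {0..<nh}; vx maps a half-edge to its vertex, pr is the fixed-point-free
involution pairing half-edges into edges, and st v is the Q-structure at v on
the set of half-edges at v.  The orientation is the one of
det(R^V) tensor det(R^H) (equivalently det(R^V) tensor the edge directions)
given by the numberings of vertices and half-edges.\<close>

record 'q qgraph =
  nv :: nat
  nh :: nat
  vx :: "nat \<Rightarrow> nat"
  pr :: "nat \<Rightarrow> nat"
  st :: "nat \<Rightarrow> 'q"

definition hes :: "'q qgraph \<Rightarrow> nat \<Rightarrow> nat set" where
  "hes G v = {h. h < nh G \<and> vx G h = v}"

definition wf :: "'q species \<Rightarrow> 'q qgraph \<Rightarrow> bool" where
  "wf Q G \<longleftrightarrow>
     (\<forall>h < nh G. vx G h < nv G \<and> pr G h < nh G \<and> pr G h \<noteq> h \<and> pr G (pr G h) = h) \<and>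
     (\<forall>h. nh G \<le> h \<longrightarrow> vx G h = 0 \<and> pr G h = 0) \<and>
     (\<forall>v < nv G. st G v \<in> Qs Q (hes G v)) \<and>
     (\<forall>v. nv G \<le> v \<longrightarrow> st G v = undefined)"

definition relabel :: "'q species \<Rightarrow> (nat \<Rightarrow> nat) \<Rightarrow> (nat \<Rightarrow> nat) \<Rightarrow> 'q qgraph \<Rightarrow> 'q qgraph" where
  "relabel Q \<sigma> \<tau> G =
     \<lparr> nv = nv G, nh = nh G,
       vx = (\<lambda>h. if h < nh G then \<sigma> (vx G (inv \<tau> h)) else 0),
       pr = (\<lambda>h. if h < nh G then \<tau> (pr G (inv \<tau> h)) else 0),
       st = (\<lambda>v. if v < nv G then tr Q \<tau> (st G (inv \<sigma> v)) else undefined) \<rparr>"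

type_synonym 'q chain = "'q qgraph \<Rightarrow> rat"

definition gchains :: "'q species \<Rightarrow> 'q chain set" where
  "gchains Q = {c. finite {G. c G \<noteq> 0} \<and> (\<forall>G. c G \<noteq> 0 \<longrightarrow> wf Q G)}"

definition single :: "'q qgraph \<Rightarrow> 'q chain" where
  "single G = (\<lambda>K. if K = G then 1 else 0)"

definition smult :: "rat \<Rightarrow> 'q chain \<Rightarrow> 'q chain" where
  "smult r c = (\<lambda>K. r * c K)"

definition lin :: "('q qgraph \<Rightarrow> 'q chain) \<Rightarrow> 'q chain \<Rightarrow> 'q chain" where
  "lin f c = (\<Sum>G\<in>{G. c G \<noteq> 0}. smult (c G) (f G))"

definition lin2 :: "('q qgraph \<Rightarrow> 'q qgraph \<Rightarrow> 'q chain) \<Rightarrow> 'q chain \<Rightarrow> 'q chain \<Rightarrow> 'q chain" where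
  "lin2 f c d = (\<Sum>G1\<in>{G. c G \<noteq> 0}. \<Sum>G2\<in>{G. d G \<noteq> 0}. smult (c G1 * d G2) (f G1 G2))"

text \<open>The subspace of relations: a graph equals sign(sigma)*sign(tau) times its
relabelling (this encodes both isomorphism and orientation reversal).  The graph
complex is chains modulo this subspace.\<close>

inductive_set relsp :: "'q species \<Rightarrow> 'q chain set" for Q where
  zero: "(\<lambda>K. 0) \<in> relsp Q"
| add: "x \<in> relsp Q \<Longrightarrow> y \<in> relsp Q \<Longrightarrow> x + y \<in> relsp Q"
| scale: "x \<in> relsp Q \<Longrightarrow> smult r x \<in> relsp Q"
| gen: "wf Q G \<Longrightarrow> \<sigma> permutes {..<nv G} \<Longrightarrow> \<tau> permutes {..<nh G} \<Longrightarrow>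
        single G - smult (of_int (sign \<sigma> * sign \<tau>)) (single (relabel Q \<sigma> \<tau> G)) \<in> relsp Q"

text \<open>skip2 x y enumerates the naturals other than x,y in increasing order;
rank2 x y is its inverse.\<close>

definition skip2 :: "nat \<Rightarrow> nat \<Rightarrow> nat \<Rightarrow> nat" where
  "skip2 x y k = (if k < min x y then k else if k + 1 < max x y then k + 1 else k + 2)"

definition rank2 :: "nat \<Rightarrow> nat \<Rightarrow> nat \<Rightarrow> nat" where
  "rank2 x y k = k - card {u \<in> {x, y}. u < k}"

text \<open>Sign of the permutation of {0..<n} listing i, j first and then the rest
in increasing order.\<close>

definition fsign :: "nat \<Rightarrow> nat \<Rightarrow> rat" where
  "fsign i j = (if i < j then (-1) ^ (i + j - 1) else (-1) ^ (i + j))"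

text \<open>Contracting the pair of half-edges a, b at distinct vertices i, j: the
orientation is first rewritten as (v_i v_j ...) tensor (a b ...), then v_i, v_j
are merged into the new vertex 0 (Q-structure given by the mating along a, b)
and a, b are deleted.  The former partners of a and b are paired with each
other (for an edge, pr a = b, this does nothing; for a quasi-edge this joins
the two remaining half-edges into a new edge).\<close>

definition contr_graph :: "'q species \<Rightarrow> 'q qgraph \<Rightarrow> nat \<Rightarrow> nat \<Rightarrow> 'q qgraph" where
  "contr_graph Q G a b =
     (let i = vx G a; j = vx G b;
          vnew = (\<lambda>v. Suc (rank2 i j v));
          hnew = rank2 a b;
          rp = (\<lambda>h. if pr G h = a then pr G b else if pr G h = b then pr G a else pr G h);
          nv' = nv G - 1; nh' = nh G - 2
      in \<lparr> nv = nv',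
           nh = nh',
           vx = (\<lambda>h. if h < nh' then (let v = vx G (skip2 a b h) in
                                        if v = i \<or> v = j then 0 else vnew v) else 0),
           pr = (\<lambda>h. if h < nh' then hnew (rp (skip2 a b h)) else 0),
           st = (\<lambda>w. if w = 0 then tr Q hnew (mate Q a (st G i) b (st G j))
                     else if w < nv' then tr Q hnew (st G (skip2 i j (w - 1)))
                     else undefined) \<rparr>)"

definition contr :: "'q species \<Rightarrow> 'q qgraph \<Rightarrow> nat \<Rightarrow> nat \<Rightarrow> 'q chain" where
  "contr Q G a b = smult (fsign (vx G a) (vx G b) * fsign a b) (single (contr_graph Q G a b))"

definition dE_graph :: "'q species \<Rightarrow> 'q qgraph \<Rightarrow> 'q chain" where
  "dE_graph Q G = (\<Sum>(a, b)\<in>{(a, b). a < b \<and> b < nh G \<and> pr G a = b \<and> vx G a \<noteq> vx G b}.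
                      contr Q G a b)"

definition dH_graph :: "'q species \<Rightarrow> 'q qgraph \<Rightarrow> 'q chain" where
  "dH_graph Q G = (\<Sum>(a, b)\<in>{(a, b). a < b \<and> b < nh G \<and> pr G a \<noteq> b \<and> vx G a \<noteq> vx G b}.
                      contr Q G a b)"

definition dE :: "'q species \<Rightarrow> 'q chain \<Rightarrow> 'q chain" where
  "dE Q = lin (dE_graph Q)"

definition dH :: "'q species \<Rightarrow> 'q chain \<Rightarrow> 'q chain" where
  "dH Q = lin (dH_graph Q)"

definition mu_graph :: "'q species \<Rightarrow> 'q qgraph \<Rightarrow> 'q qgraph \<Rightarrow> 'q qgraph" where
  "mu_graph Q G1 G2 =
     \<lparr> nv = nv G1 + nv G2,
       nh = nh G1 + nh G2,
       vx = (\<lambda>h. if h < nh G1 then vx G1 h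
                 else if h < nh G1 + nh G2 then nv G1 + vx G2 (h - nh G1) else 0),
       pr = (\<lambda>h. if h < nh G1 then pr G1 h
                 else if h < nh G1 + nh G2 then nh G1 + pr G2 (h - nh G1) else 0),
       st = (\<lambda>v. if v < nv G1 then st G1 v
                 else if v < nv G1 + nv G2 then tr Q (\<lambda>h. h + nh G1) (st G2 (v - nv G1))
                 else undefined) \<rparr>"

definition mu :: "'q species \<Rightarrow> 'q chain \<Rightarrow> 'q chain \<Rightarrow> 'q chain" where
  "mu Q = lin2 (\<lambda>G1 G2. single (mu_graph Q G1 G2))"

text \<open>[ , ] = partial_H mu - mu partial_H, where partial_H acts on the tensor
square with the Koszul sign: partial_H (x tensor y) = partial_H x tensor y +
(-1)^|x| x tensor partial_H y, the degree parity of a graph being its number of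
vertices (the parity for which partial_E mu = mu partial_E holds).\<close>

definition bracket_graph :: "'q species \<Rightarrow> 'q qgraph \<Rightarrow> 'q qgraph \<Rightarrow> 'q chain" where
  "bracket_graph Q G1 G2 =
     dH Q (single (mu_graph Q G1 G2))
     - mu Q (dH Q (single G1)) (single G2)
     - smult ((-1) ^ nv G1) (mu Q (single G1) (dH Q (single G2)))"

definition bracket :: "'q species \<Rightarrow> 'q chain \<Rightarrow> 'q chain \<Rightarrow> 'q chain" where
  "bracket Q = lin2 (bracket_graph Q)"



end

theory Submission
  imports Defs
begin

declare minus_apply[simp del] uminus_apply[simp del] plus_fun_apply[simp del] zero_fun_apply[simp del] times_fun_apply[simp del] one_fun_apply[simp del]

lemma fun_add_apply: "(f + g) x = f x + (g::'a \<Rightarrow> 'b::plus) x" by (simp add: plus_fun_def)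
lemma fun_diff_apply: "(f - g) x = f x - (g::'a \<Rightarrow> 'b::minus) x" by (rule minus_apply)
lemma fun_neg_apply: "(- f) x = - (f::'a \<Rightarrow> 'b::uminus) x" by (rule uminus_apply)
lemma fun_zero_apply: "(0::'a \<Rightarrow> 'b::zero) x = 0" by (simp add: zero_fun_def)
lemma zero_fun_lam: "(\<lambda>K. 0) = (0::'a \<Rightarrow> 'b::zero)" by (simp add: zero_fun_def)
lemmas fun_ops = fun_add_apply fun_diff_apply fun_neg_apply fun_zero_apply

definition fs :: "'q chain \<Rightarrow> bool" where "fs c \<longleftrightarrow> finite {G. c G \<noteq> 0}"

lemma sum_fun_apply: "(\<Sum>i\<in>A. f i) x = (\<Sum>i\<in>A. f i x)"
  by (induction A rule: infinite_finite_induct) (auto simp: fun_ops)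

lemma smult_apply: "smult r c G = r * c G" by (simp add: smult_def)
lemma single_apply: "single G K = (if K = G then 1 else 0)" by (simp add: single_def)

lemma smult_0[simp]: "smult 0 c = 0" by (auto simp: smult_def fun_eq_iff fun_ops)
lemma smult_zero[simp]: "smult r 0 = 0" by (auto simp: smult_def fun_eq_iff fun_ops)
lemma smult_1[simp]: "smult 1 c = c" by (auto simp: smult_def fun_eq_iff)
lemma smult_smult[simp]: "smult a (smult b c) = smult (a*b) c" by (auto simp: smult_def fun_eq_iff)
lemma smult_add: "smult a (c + d) = smult a c + smult a d" by (auto simp: smult_def fun_eq_iff algebra_simps fun_ops)
lemma smult_diff: "smult a (c - d) = smult a c - smult a d" by (auto simp: smult_def fun_eq_iff algebra_simps fun_ops)
lemma smult_add_left: "smult (a + b) c = smult a c + smult b c" by (auto simp: smult_def fun_eq_iff algebra_simps fun_ops)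
lemma smult_sum: "smult r (\<Sum>i\<in>A. f i) = (\<Sum>i\<in>A. smult r (f i))"
  by (induction A rule: infinite_finite_induct) (simp_all add: smult_add)
lemma smult_sum_left: "smult (\<Sum>i\<in>A. f i) c = (\<Sum>i\<in>A. smult (f i) c)"
  by (induction A rule: infinite_finite_induct) (simp_all add: smult_add_left)
lemma smult_minus1: "smult (-1) c = - c" by (auto simp: fun_eq_iff fun_ops smult_def)
lemma smult_uminus: "smult r (- c) = - smult r c" by (auto simp: fun_eq_iff fun_ops smult_def)

lemma lin_eq: "finite A \<Longrightarrow> {G. c G \<noteq> 0} \<subseteq> A \<Longrightarrow> lin f c = (\<Sum>G\<in>A. smult (c G) (f G))"
  unfolding lin_def by (rule sum.mono_neutral_left) auto

lemma lin_add: "fs c \<Longrightarrow> fs d \<Longrightarrow> lin f (c + d) = lin f c + lin f d"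
proof -
  assume c: "fs c" and d: "fs d"
  let ?A = "{G. c G \<noteq> 0} \<union> {G. d G \<noteq> 0}"
  have fA: "finite ?A" using c d by (simp add: fs_def)
  have "lin f (c + d) = (\<Sum>G\<in>?A. smult ((c + d) G) (f G))" by (rule lin_eq[OF fA]) (auto simp: fun_ops)
  also have "\<dots> = (\<Sum>G\<in>?A. smult (c G) (f G)) + (\<Sum>G\<in>?A. smult (d G) (f G))"
    by (simp add: smult_add_left sum.distrib fun_ops)
  also have "\<dots> = lin f c + lin f d" using lin_eq[OF fA, of c] lin_eq[OF fA, of d] by auto
  finally show ?thesis .
qed

lemma lin_smult: "fs c \<Longrightarrow> lin f (smult r c) = smult r (lin f c)"
proof -
  assume c: "fs c"
  let ?A = "{G. c G \<noteq> 0}"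
  have fA: "finite ?A" using c by (simp add: fs_def)
  have "lin f (smult r c) = (\<Sum>G\<in>?A. smult (smult r c G) (f G))" by (rule lin_eq[OF fA]) (auto simp: smult_def)
  also have "\<dots> = smult r (lin f c)" using lin_eq[OF fA, of c] by (simp add: smult_sum smult_apply)
  finally show ?thesis .
qed

lemma lin_zero[simp]: "lin f 0 = 0" by (simp add: lin_def fun_ops)
lemma lin_zero'[simp]: "lin f (\<lambda>K. 0) = 0" by (simp add: lin_def)

lemma lin_single[simp]: "lin f (single G) = f G"
proof -
  have "lin f (single G) = (\<Sum>K\<in>{G}. smult (single G K) (f K))" by (rule lin_eq) (auto simp: single_def)
  thus ?thesis by (simp add: single_def)
qed

lemma fs_add[simp]: "fs c \<Longrightarrow> fs d \<Longrightarrow> fs (c + d)"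
  unfolding fs_def by (rule finite_subset[of _ "{G. c G \<noteq> 0} \<union> {G. d G \<noteq> 0}"]) (auto simp: fun_ops)
lemma fs_uminus[simp]: "fs (- c) = fs c" unfolding fs_def by (simp add: fun_ops)
lemma fs_diff[simp]: "fs c \<Longrightarrow> fs d \<Longrightarrow> fs (c - d)"
  unfolding fs_def by (rule finite_subset[of _ "{G. c G \<noteq> 0} \<union> {G. d G \<noteq> 0}"]) (auto simp: fun_ops)
lemma fs_smult[simp]: "fs c \<Longrightarrow> fs (smult r c)"
  unfolding fs_def by (rule finite_subset[of _ "{G. c G \<noteq> 0}"]) (auto simp: smult_def)
lemma fs_single[simp]: "fs (single G)"
  unfolding fs_def by (rule finite_subset[of _ "{G}"]) (auto simp: single_def)
lemma fs_zero[simp]: "fs 0" "fs (\<lambda>K. 0)" unfolding fs_def by (auto simp: fun_ops)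
lemma fs_sum: "(\<And>i. i \<in> A \<Longrightarrow> fs (f i)) \<Longrightarrow> fs (\<Sum>i\<in>A. f i)"
  by (induction A rule: infinite_finite_induct) auto
lemma fs_lin: "fs c \<Longrightarrow> (\<And>G. c G \<noteq> 0 \<Longrightarrow> fs (f G)) \<Longrightarrow> fs (lin f c)"
  unfolding lin_def by (rule fs_sum) auto

lemma lin_neg: "fs c \<Longrightarrow> lin f (- c) = - lin f c"
  using lin_smult[of c f "-1"] by (simp add: smult_minus1)
lemma lin_diff: "fs c \<Longrightarrow> fs d \<Longrightarrow> lin f (c - d) = lin f c - lin f d"
  using lin_add[of c "- d" f] lin_neg[of d f] by simp

lemma lin_sum: "(\<And>i. i \<in> A \<Longrightarrow> fs (g i)) \<Longrightarrow> lin f (\<Sum>i\<in>A. g i) = (\<Sum>i\<in>A. lin f (g i))"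
proof (induction A rule: infinite_finite_induct)
  case (insert x F)
  then show ?case by (simp add: lin_add fs_sum)
qed auto

lemma lin_cong: "(\<And>G. c G \<noteq> 0 \<Longrightarrow> f G = g G) \<Longrightarrow> lin f c = lin g c"
  unfolding lin_def by (rule sum.cong) auto

lemma lin_fun_add: "lin (\<lambda>G. f G + g G) c = lin f c + lin g c"
  unfolding lin_def by (simp add: smult_add sum.distrib)
lemma lin_fun_diff: "lin (\<lambda>G. f G - g G) c = lin f c - lin g c"
  unfolding lin_def by (simp add: smult_diff sum_subtractf)
lemma lin_fun_smult: "lin (\<lambda>G. smult r (f G)) c = smult r (lin f c)"
  unfolding lin_def by (simp add: smult_sum mult.commute)
lemma lin_fun_zero[simp]: "lin (\<lambda>G. 0) c = 0"
  unfolding lin_def by simp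
lemma lin_fun_sum: "lin (\<lambda>G. \<Sum>i\<in>A. f i G) c = (\<Sum>i\<in>A. lin (f i) c)"
  unfolding lin_def by (simp add: smult_sum sum.swap[of _ A])

lemma lin_lin: "fs c \<Longrightarrow> (\<And>G. c G \<noteq> 0 \<Longrightarrow> fs (g G)) \<Longrightarrow> lin f (lin g c) = lin (\<lambda>G. lin f (g G)) c"
proof -
  assume c: "fs c" and g: "\<And>G. c G \<noteq> 0 \<Longrightarrow> fs (g G)"
  have "lin f (lin g c) = (\<Sum>G\<in>{G. c G \<noteq> 0}. lin f (smult (c G) (g G)))"
    unfolding lin_def[of g] by (rule lin_sum) (auto intro: g fs_smult)
  also have "\<dots> = (\<Sum>G\<in>{G. c G \<noteq> 0}. smult (c G) (lin f (g G)))"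
    by (rule sum.cong) (auto simp: lin_smult g)
  finally show ?thesis by (simp add: lin_def)
qed

lemma lin2_eq: "lin2 B c d = lin (\<lambda>G1. lin (B G1) d) c"
  unfolding lin2_def lin_def by (simp add: smult_sum)

lemma lin_swap: "fs c \<Longrightarrow> fs d \<Longrightarrow> lin (\<lambda>G. lin (\<lambda>G'. B G G') d) c = lin (\<lambda>G'. lin (\<lambda>G. B G G') c) d"
  unfolding lin_def by (simp add: smult_sum sum.swap[of _ "{G. c G \<noteq> 0}"] mult.commute)

lemma lin_sum_single: "lin f (\<Sum>i\<in>A. smult (r i) (single (k i))) = (\<Sum>i\<in>A. smult (r i) (f (k i)))"
  by (subst lin_sum) (auto simp: lin_smult)

lemma relsp_zero0: "0 \<in> relsp Q" using relsp.zero[of Q] by (simp add: zero_fun_lam)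

lemma relsp_fs: "x \<in> relsp Q \<Longrightarrow> fs x"
  by (induction rule: relsp.induct) auto

lemma relsp_neg: "x \<in> relsp Q \<Longrightarrow> - x \<in> relsp Q"
  using relsp.scale[of x Q "-1"] by (simp add: smult_minus1)

lemma relsp_diff: "x \<in> relsp Q \<Longrightarrow> y \<in> relsp Q \<Longrightarrow> x - y \<in> relsp Q"
  using relsp.add[OF _ relsp_neg] by (metis diff_conv_add_uminus)

lemma relsp_sum: "(\<And>i. i \<in> A \<Longrightarrow> f i \<in> relsp Q) \<Longrightarrow> (\<Sum>i\<in>A. f i) \<in> relsp Q"
  by (induction A rule: infinite_finite_induct) (auto intro: relsp_zero0 relsp.add)

lemma relsp_lin: "fs c \<Longrightarrow> (\<And>G. c G \<noteq> 0 \<Longrightarrow> f G \<in> relsp Q) \<Longrightarrow> lin f c \<in> relsp Q"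
  unfolding lin_def by (rule relsp_sum) (auto intro: relsp.scale)

lemma sign_sq: "(of_int (sign (s::nat\<Rightarrow>nat) * sign t) :: rat) * of_int (sign s * sign t) = 1"
proof -
  have "sign s * sign t * (sign s * sign t) = (sign s * sign s) * (sign t * sign t)" by (simp add: algebra_simps)
  also have "\<dots> = 1" by simp
  finally have "sign s * sign t * (sign s * sign t) = (1::int)" .
  then show ?thesis by (metis of_int_1 of_int_mult)
qed

lemma relsp_relabel:
  assumes "wf Q G" "\<sigma> permutes {..<nv G}" "\<tau> permutes {..<nh G}"
  shows "single (relabel Q \<sigma> \<tau> G) - smult (of_int (sign \<sigma> * sign \<tau>)) (single G) \<in> relsp Q"
proof -
  let ?e = "(of_int (sign \<sigma> * sign \<tau>)) :: rat"
  have "smult (- ?e) (single G - smult ?e (single (relabel Q \<sigma> \<tau> G))) \<in> relsp Q"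
    by (rule relsp.scale[OF relsp.gen[OF assms]])
  also have "smult (- ?e) (single G - smult ?e (single (relabel Q \<sigma> \<tau> G)))
     = single (relabel Q \<sigma> \<tau> G) - smult ?e (single G)"
  proof -
    have e2: "?e * ?e = 1" by (rule sign_sq)
    have "\<And>a b::rat. - ?e * (a - ?e * b) = b - ?e * a"
    proof -
      fix a b :: rat
      have "- ?e * (a - ?e * b) = b * (?e * ?e) - ?e * a" by (simp add: algebra_simps)
      with e2 show "- ?e * (a - ?e * b) = b - ?e * a" by simp
    qed
    then show ?thesis by (simp add: fun_eq_iff fun_ops smult_apply)
  qed
  finally show ?thesis .
qed

lemma relsp_lin_relsp:
  assumes r: "r \<in> relsp Q" and fsf: "\<And>G. fs (f G)"
    and inv: "\<And>G \<sigma> \<tau>. wf Q G \<Longrightarrow> \<sigma> permutes {..<nv G} \<Longrightarrow> \<tau> permutes {..<nh G} \<Longrightarrow>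
       f G - smult (of_int (sign \<sigma> * sign \<tau>)) (f (relabel Q \<sigma> \<tau> G)) \<in> relsp Q"
  shows "lin f r \<in> relsp Q"
  using r
proof (induction rule: relsp.induct)
  case zero
  then show ?case by (simp add: relsp_zero0)
next
  case (add x y)
  then show ?case by (simp add: lin_add relsp_fs relsp.add)
next
  case (scale x r)
  then show ?case by (simp add: lin_smult relsp_fs relsp.scale)
next
  case (gen G \<sigma> \<tau>)
  then show ?case using inv[OF gen] by (simp add: lin_diff lin_smult)
qed

lemma gchains_iff: "c \<in> gchains Q \<longleftrightarrow> fs c \<and> (\<forall>G. c G \<noteq> 0 \<longrightarrow> wf Q G)"
  by (simp add: gchains_def fs_def)

lemma gchains_fs: "c \<in> gchains Q \<Longrightarrow> fs c" by (simp add: gchains_iff)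
lemma gchains_wf: "c \<in> gchains Q \<Longrightarrow> c G \<noteq> 0 \<Longrightarrow> wf Q G" by (simp add: gchains_iff)

lemma gchains_add: "c \<in> gchains Q \<Longrightarrow> d \<in> gchains Q \<Longrightarrow> c + d \<in> gchains Q"
  unfolding gchains_iff by (auto simp: fun_ops) (metis add.left_neutral)
lemma gchains_diff: "c \<in> gchains Q \<Longrightarrow> d \<in> gchains Q \<Longrightarrow> c - d \<in> gchains Q"
  unfolding gchains_iff by (auto simp: fun_ops) (metis diff_zero diff_0)
lemma gchains_smult: "c \<in> gchains Q \<Longrightarrow> smult r c \<in> gchains Q"
  unfolding gchains_iff by (auto simp: smult_apply)
lemma gchains_zero: "0 \<in> gchains Q"
  unfolding gchains_iff by (auto simp: fun_ops)
lemma gchains_single: "wf Q G \<Longrightarrow> single G \<in> gchains Q"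
  unfolding gchains_iff using fs_single[of G] by (auto simp: single_def)
lemma gchains_sum: "(\<And>i. i \<in> A \<Longrightarrow> f i \<in> gchains Q) \<Longrightarrow> (\<Sum>i\<in>A. f i) \<in> gchains Q"
  by (induction A rule: infinite_finite_induct) (auto intro: gchains_zero gchains_add)
lemma gchains_lin: "fs c \<Longrightarrow> (\<And>G. c G \<noteq> 0 \<Longrightarrow> f G \<in> gchains Q) \<Longrightarrow> lin f c \<in> gchains Q"
  unfolding lin_def by (rule gchains_sum) (auto intro: gchains_smult)

lemma rank2_eq: "x \<noteq> y \<Longrightarrow> rank2 x y k = k - ((if x < k then 1 else 0) + (if y < k then 1 else 0))"
proof -
  assume xy: "x \<noteq> y"
  have "{u \<in> {x, y}. u < k} = (if x < k then {x} else {}) \<union> (if y < k then {y} else {})" by auto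
  then show ?thesis using xy unfolding rank2_def by (auto split: if_splits)
qed

lemma rank2_sym: "rank2 x y = rank2 y x" unfolding rank2_def by (simp add: insert_commute)
lemma skip2_sym: "skip2 x y = skip2 y x" by (rule ext) (simp add: skip2_def max_def min_def)

context fixes x y :: nat assumes xy: "x \<noteq> y"
begin
lemma skip_rank: "k \<noteq> x \<Longrightarrow> k \<noteq> y \<Longrightarrow> skip2 x y (rank2 x y k) = k"
  using xy by (simp add: rank2_eq skip2_def split: if_splits) arith?
lemma rank_skip: "rank2 x y (skip2 x y k) = k"
  using xy by (simp add: rank2_eq skip2_def split: if_splits) arith?
lemma skip_neq1: "skip2 x y k \<noteq> x"
  using xy by (simp add: skip2_def split: if_splits) arith?
lemma skip_neq2: "skip2 x y k \<noteq> y"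
  using xy by (simp add: skip2_def split: if_splits) arith?
lemma rank_mono: "k < k' \<Longrightarrow> k \<noteq> x \<Longrightarrow> k \<noteq> y \<Longrightarrow> k' \<noteq> x \<Longrightarrow> k' \<noteq> y \<Longrightarrow> rank2 x y k < rank2 x y k'"
  using xy by (simp add: rank2_eq split: if_splits) arith?
lemma rank_inj: "k \<noteq> x \<Longrightarrow> k \<noteq> y \<Longrightarrow> k' \<noteq> x \<Longrightarrow> k' \<noteq> y \<Longrightarrow> rank2 x y k = rank2 x y k' \<Longrightarrow> k = k'"
  by (metis skip_rank)
lemma rank_lt: "k < n \<Longrightarrow> x < n \<Longrightarrow> y < n \<Longrightarrow> k \<noteq> x \<Longrightarrow> k \<noteq> y \<Longrightarrow> rank2 x y k < n - 2"
  using xy by (simp add: rank2_eq split: if_splits) arith?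
lemma skip_lt: "k < n - 2 \<Longrightarrow> x < n \<Longrightarrow> y < n \<Longrightarrow> skip2 x y k < n"
  using xy by (simp add: skip2_def split: if_splits) arith?
lemma skip_mono: "k < k' \<Longrightarrow> skip2 x y k < skip2 x y k'"
  using xy by (simp add: skip2_def split: if_splits) arith?
lemma skip_inj: "skip2 x y k = skip2 x y k' \<Longrightarrow> k = k'"
  by (metis rank_skip)
lemma rank_shift: "rank2 (n + x) (n + y) (n + k) = n + rank2 x y k"
  using xy by (simp add: rank2_eq split: if_splits) arith?
lemma rank_low: "k < n \<Longrightarrow> rank2 (n + x) (n + y) k = k"
  using xy by (simp add: rank2_eq split: if_splits)
lemma skip_shift: "skip2 (n + x) (n + y) (n + k) = n + skip2 x y k"
  using xy by (simp add: skip2_def split: if_splits) arith?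
lemma skip_low: "k < n \<Longrightarrow> skip2 (n + x) (n + y) k = k"
  using xy by (simp add: skip2_def split: if_splits)
lemma rank_below: "k < x \<Longrightarrow> k < y \<Longrightarrow> rank2 x y k = k"
  using xy by (simp add: rank2_eq split: if_splits)
lemma rank_above: "x < k \<Longrightarrow> y < k \<Longrightarrow> rank2 x y k = k - 2"
  using xy by (simp add: rank2_eq split: if_splits)
lemma skip_below: "k < x \<Longrightarrow> k < y \<Longrightarrow> skip2 x y k = k"
  using xy by (simp add: skip2_def split: if_splits)
lemma skip_above: "x \<le> k + 1 \<Longrightarrow> y \<le> k + 1 \<Longrightarrow> skip2 x y k = k + 2"
  using xy by (simp add: skip2_def split: if_splits) arith?
end

lemma fsign_shift: "fsign (n + i) (n + j) = fsign i j"
proof (cases "i < j")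
  case True
  then have e: "n + i + (n + j) - 1 = (i + j - 1) + 2 * n" by arith
  have "(-1::rat) ^ (n + i + (n + j) - 1) = (-1) ^ ((i + j - 1) + 2 * n)" by (simp only: e)
  also have "\<dots> = (-1) ^ (i + j - 1)" by (simp add: power_add power_mult)
  finally show ?thesis using True by (simp add: fsign_def)
next
  case False
  have "n + i + (n + j) = (i + j) + 2 * n" by arith
  then show ?thesis using False by (simp add: fsign_def power_add power_mult)
qed

locale ms = fixes Q :: "'q species" assumes msQ: "mated_species Q"
begin
lemma spQ: "species Q" using msQ by (simp add: mated_species_def)
lemma sp1: "\<forall>S f x. finite S \<longrightarrow> inj_on f S \<longrightarrow> x \<in> Qs Q S \<longrightarrow> tr Q f x \<in> Qs Q (f ` S)"
  using spQ unfolding species_def by (rule conjunct1)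
lemma sp2: "\<forall>S x. x \<in> Qs Q S \<longrightarrow> tr Q id x = x"
  using spQ unfolding species_def by (elim conjE)
lemma sp3: "\<forall>S f g x. finite S \<longrightarrow> inj_on f S \<longrightarrow> inj_on g (f ` S) \<longrightarrow> x \<in> Qs Q S \<longrightarrow>
        tr Q (g \<circ> f) x = tr Q g (tr Q f x)"
  using spQ unfolding species_def by (elim conjE)
lemma sp4: "\<forall>S f g x. x \<in> Qs Q S \<longrightarrow> (\<forall>s\<in>S. f s = g s) \<longrightarrow> tr Q f x = tr Q g x"
  using spQ unfolding species_def by (elim conjE)
lemma ms1: "\<forall>S T a b x y. finite S \<longrightarrow> finite T \<longrightarrow> S \<inter> T = {} \<longrightarrow> a \<in> S \<longrightarrow> b \<in> T \<longrightarrow>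
        x \<in> Qs Q S \<longrightarrow> y \<in> Qs Q T \<longrightarrow> mate Q a x b y \<in> Qs Q ((S - {a}) \<union> (T - {b}))"
  using msQ unfolding mated_species_def by (elim conjE)
lemma ms2: "\<forall>S T a b x y f. finite S \<longrightarrow> finite T \<longrightarrow> S \<inter> T = {} \<longrightarrow> a \<in> S \<longrightarrow> b \<in> T \<longrightarrow>
        x \<in> Qs Q S \<longrightarrow> y \<in> Qs Q T \<longrightarrow> inj_on f (S \<union> T) \<longrightarrow>
        tr Q f (mate Q a x b y) = mate Q (f a) (tr Q f x) (f b) (tr Q f y)"
  using msQ unfolding mated_species_def by (elim conjE)
lemma tr_Qs: "finite S \<Longrightarrow> inj_on f S \<Longrightarrow> x \<in> Qs Q S \<Longrightarrow> tr Q f x \<in> Qs Q (f ` S)"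
  using sp1 by blast
lemma tr_id: "x \<in> Qs Q S \<Longrightarrow> tr Q id x = x"
  using sp2 by blast
lemma tr_comp: "finite S \<Longrightarrow> inj_on f S \<Longrightarrow> inj_on g (f ` S) \<Longrightarrow> x \<in> Qs Q S \<Longrightarrow> tr Q (g \<circ> f) x = tr Q g (tr Q f x)"
  using sp3 by blast
lemma tr_cong: "x \<in> Qs Q S \<Longrightarrow> (\<And>s. s \<in> S \<Longrightarrow> f s = g s) \<Longrightarrow> tr Q f x = tr Q g x"
  using sp4 by blast
lemma tr_idS: "x \<in> Qs Q S \<Longrightarrow> (\<And>s. s \<in> S \<Longrightarrow> f s = s) \<Longrightarrow> tr Q f x = x"
  using tr_cong[of x S f id] tr_id by simp
lemma tr_tr: "finite S \<Longrightarrow> inj_on f S \<Longrightarrow> inj_on g (f ` S) \<Longrightarrow> x \<in> Qs Q S \<Longrightarrow>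
   (\<And>s. s \<in> S \<Longrightarrow> g (f s) = h s) \<Longrightarrow> tr Q g (tr Q f x) = tr Q h x"
  using tr_comp[of S f g x] tr_cong[of x S "g \<circ> f" h] by simp
lemma mate_Qs: "finite S \<Longrightarrow> finite T \<Longrightarrow> S \<inter> T = {} \<Longrightarrow> a \<in> S \<Longrightarrow> b \<in> T \<Longrightarrow>
        x \<in> Qs Q S \<Longrightarrow> y \<in> Qs Q T \<Longrightarrow> mate Q a x b y \<in> Qs Q ((S - {a}) \<union> (T - {b}))"
  using ms1 by blast
lemma mate_eqv: "finite S \<Longrightarrow> finite T \<Longrightarrow> S \<inter> T = {} \<Longrightarrow> a \<in> S \<Longrightarrow> b \<in> T \<Longrightarrow>
        x \<in> Qs Q S \<Longrightarrow> y \<in> Qs Q T \<Longrightarrow> inj_on f (S \<union> T) \<Longrightarrow>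
        tr Q f (mate Q a x b y) = mate Q (f a) (tr Q f x) (f b) (tr Q f y)"
  using ms2 by blast
end

lemma hes_finite: "finite (hes G v)" unfolding hes_def by (rule finite_subset[of _ "{..<nh G}"]) auto

context fixes Q :: "'q species" and G :: "'q qgraph" assumes W: "wf Q G"
begin
lemma wf_vx: "h < nh G \<Longrightarrow> vx G h < nv G" using W by (simp add: wf_def)
lemma wf_pr: "h < nh G \<Longrightarrow> pr G h < nh G" using W by (simp add: wf_def)
lemma wf_prn: "h < nh G \<Longrightarrow> pr G h \<noteq> h" using W by (simp add: wf_def)
lemma wf_prpr: "h < nh G \<Longrightarrow> pr G (pr G h) = h" using W by (simp add: wf_def)
lemma wf_vx0: "nh G \<le> h \<Longrightarrow> vx G h = 0" using W by (simp add: wf_def)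
lemma wf_pr0: "nh G \<le> h \<Longrightarrow> pr G h = 0" using W by (simp add: wf_def)
lemma wf_st: "v < nv G \<Longrightarrow> st G v \<in> Qs Q (hes G v)" using W by (simp add: wf_def)
lemma wf_st0: "nv G \<le> v \<Longrightarrow> st G v = undefined" using W by (simp add: wf_def)
lemma wf_pr_inj: "h < nh G \<Longrightarrow> h' < nh G \<Longrightarrow> pr G h = pr G h' \<Longrightarrow> h = h'" by (metis wf_prpr)
end

definition swp :: "'q qgraph \<Rightarrow> nat \<Rightarrow> nat \<Rightarrow> 'q qgraph" where
  "swp G a b = G\<lparr>pr := (\<lambda>h. if h = a then b else if h = b then a else if h = pr G a then pr G b
                          else if h = pr G b then pr G a else pr G h)\<rparr>"

lemma swp_simps[simp]: "nv (swp G a b) = nv G" "nh (swp G a b) = nh G" "vx (swp G a b) = vx G"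
  "st (swp G a b) = st G" by (simp_all add: swp_def)

lemma swp_app[simp]: "vx (swp G a b) h = vx G h" "st (swp G a b) v = st G v" by (simp_all add: swp_def)

lemma swp_pr: "pr (swp G a b) h = (if h = a then b else if h = b then a else if h = pr G a then pr G b
                          else if h = pr G b then pr G a else pr G h)" by (simp add: swp_def)

context fixes Q :: "'q species" and G :: "'q qgraph" and a b
  assumes W: "wf Q G" and ab: "a < nh G" "b < nh G" "a \<noteq> b" "pr G a \<noteq> b"
begin
lemma qp_facts: "pr G a < nh G" "pr G b < nh G" "pr G a \<noteq> a" "pr G b \<noteq> b" "pr G b \<noteq> a"
  "pr G a \<noteq> pr G b" "pr G (pr G a) = a" "pr G (pr G b) = b"
  using W ab wf_pr wf_prn wf_prpr by metis+

lemma swp_wf: "wf Q (swp G a b)"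
proof -
  have hes: "hes (swp G a b) = hes G" by (rule ext) (simp add: hes_def)
  let ?p = "pr (swp G a b)"
  have p1: "?p h < nh G" if "h < nh G" for h
    using that ab qp_facts wf_pr[OF W] unfolding swp_pr by auto
  have p2: "?p h \<noteq> h" if "h < nh G" for h
    using that ab qp_facts wf_prn[OF W] unfolding swp_pr by auto
  have p3: "?p (?p h) = h" if "h < nh G" for h
  proof -
    consider "h = a" | "h = b" | "h = pr G a" | "h = pr G b" | "h \<noteq> a" "h \<noteq> b" "h \<noteq> pr G a" "h \<noteq> pr G b" by blast
    then show ?thesis
    proof cases
      case 5
      have "pr G h \<noteq> a" "pr G h \<noteq> b" "pr G h \<noteq> pr G a" "pr G h \<noteq> pr G b"
        using 5 that ab qp_facts wf_prpr[OF W] by metis+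
      then show ?thesis using 5 wf_prpr[OF W, OF that] unfolding swp_pr by simp
    qed (use ab qp_facts in \<open>simp_all add: swp_pr\<close>)
  qed
  have p4: "?p h = 0" if "nh G \<le> h" for h
    using that ab qp_facts wf_pr0[OF W] unfolding swp_pr by auto
  show ?thesis using W p1 p2 p3 p4 unfolding wf_def hes swp_simps by blast
qed

lemma swp_comm: "swp G b a = swp G a b"
  using ab qp_facts by (auto simp: swp_def fun_eq_iff)

lemma swp_flip: "swp G (pr G a) (pr G b) = swp G a b"
  using ab qp_facts by (auto simp: swp_def fun_eq_iff)
end

lemma qg_eq: "nv A = nv B \<Longrightarrow> nh A = nh B \<Longrightarrow> vx A = vx B \<Longrightarrow> pr A = pr B \<Longrightarrow> st A = st B \<Longrightarrow> A = (B :: 'q qgraph)"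
  by (cases A, cases B) simp

lemma relabel_simps: "nv (relabel Q \<sigma> \<tau> G) = nv G" "nh (relabel Q \<sigma> \<tau> G) = nh G"
  "vx (relabel Q \<sigma> \<tau> G) h = (if h < nh G then \<sigma> (vx G (inv \<tau> h)) else 0)"
  "pr (relabel Q \<sigma> \<tau> G) h = (if h < nh G then \<tau> (pr G (inv \<tau> h)) else 0)"
  "st (relabel Q \<sigma> \<tau> G) v = (if v < nv G then tr Q \<tau> (st G (inv \<sigma> v)) else undefined)"
  by (simp_all add: relabel_def)

lemma perm_facts: assumes "\<tau> permutes {..<(n::nat)}"
  shows "x < n \<Longrightarrow> \<tau> x < n" "x < n \<Longrightarrow> inv \<tau> x < n" "inv \<tau> (\<tau> x) = x" "\<tau> (inv \<tau> x) = x"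
    "\<tau> x = \<tau> y \<longleftrightarrow> x = y" "inv \<tau> x = inv \<tau> y \<longleftrightarrow> x = y"
  using assms permutes_in_image[OF assms] permutes_in_image[OF permutes_inv[OF assms]]
    permutes_inverses[OF assms] by (auto dest: permutes_inj[THEN injD] permutes_inj[OF permutes_inv[OF assms], THEN injD])

lemma relabel_swp:
  assumes W: "wf Q G" and s: "\<sigma> permutes {..<nv G}" and t: "\<tau> permutes {..<nh G}"
    and ab: "a < nh G" "b < nh G" "a \<noteq> b" "pr G a \<noteq> b"
  shows "relabel Q \<sigma> \<tau> (swp G a b) = swp (relabel Q \<sigma> \<tau> G) (\<tau> a) (\<tau> b)"
proof (rule qg_eq)
  note q = qp_facts[OF W ab]
  note P = perm_facts[OF t]
  show "pr (relabel Q \<sigma> \<tau> (swp G a b)) = pr (swp (relabel Q \<sigma> \<tau> G) (\<tau> a) (\<tau> b))"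
  proof (rule ext)
    fix h
    show "pr (relabel Q \<sigma> \<tau> (swp G a b)) h = pr (swp (relabel Q \<sigma> \<tau> G) (\<tau> a) (\<tau> b)) h"
    proof (cases "h < nh G")
      case True
      have iv: "inv \<tau> h = x \<longleftrightarrow> h = \<tau> x" for x using P by metis
      show ?thesis using True q ab P unfolding relabel_simps swp_pr swp_simps iv
        by (auto simp: P)
    next
      case False
      then have "h \<noteq> \<tau> a" "h \<noteq> \<tau> b" "h \<noteq> \<tau> (pr G a)" "h \<noteq> \<tau> (pr G b)" using q ab P by auto
      then show ?thesis using False unfolding relabel_simps swp_pr swp_simps using ab q by (auto simp: P)
    qed
  qed
qed (simp_all add: relabel_def fun_eq_iff)

definition QP :: "'q qgraph \<Rightarrow> (nat \<times> nat) set" where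
  "QP G = {q. fst q < snd q \<and> snd q < nh G \<and> pr G (fst q) \<noteq> snd q}"

lemma QP_finite: "finite (QP G)"
  by (rule finite_subset[of _ "{..<nh G} \<times> {..<nh G}"]) (auto simp: QP_def)

definition S_graph :: "'q qgraph \<Rightarrow> 'q chain" where
  "S_graph G = smult (1/2) (\<Sum>q\<in>QP G. single (swp G (fst q) (snd q)))"

lemma fs_S_graph: "fs (S_graph G)" unfolding S_graph_def by (rule fs_smult, rule fs_sum) simp

definition mm :: "nat \<Rightarrow> nat \<Rightarrow> nat \<times> nat" where "mm x y = (min x y, max x y)"

lemma QP_relabel_bij:
  assumes W: "wf Q G" and t: "\<tau> permutes {..<nh G}"
  shows "bij_betw (\<lambda>q. mm (\<tau> (fst q)) (\<tau> (snd q))) (QP G) (QP (relabel Q \<sigma> \<tau> G))"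
proof (rule bij_betw_byWitness[where f' = "\<lambda>q. mm (inv \<tau> (fst q)) (inv \<tau> (snd q))"])
  note P = perm_facts[OF t]
  have prR: "pr (relabel Q \<sigma> \<tau> G) h = \<tau> (pr G (inv \<tau> h))" if "h < nh G" for h
    using that by (simp add: relabel_simps)
  show "\<forall>q\<in>QP G. mm (inv \<tau> (fst (mm (\<tau> (fst q)) (\<tau> (snd q))))) (inv \<tau> (snd (mm (\<tau> (fst q)) (\<tau> (snd q))))) = q"
    by (auto simp: mm_def QP_def P min_def max_def)
  show "\<forall>q\<in>QP (relabel Q \<sigma> \<tau> G). mm (\<tau> (fst (mm (inv \<tau> (fst q)) (inv \<tau> (snd q))))) (\<tau> (snd (mm (inv \<tau> (fst q)) (inv \<tau> (snd q))))) = q"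
    by (auto simp: mm_def QP_def P min_def max_def relabel_simps)
  show "(\<lambda>q. mm (\<tau> (fst q)) (\<tau> (snd q))) ` QP G \<subseteq> QP (relabel Q \<sigma> \<tau> G)"
  proof (rule image_subsetI)
    fix q assume q: "q \<in> QP G"
    obtain a b where qab: "q = (a, b)" by force
    have ab: "a < nh G" "b < nh G" "a \<noteq> b" "pr G a \<noteq> b" using q qab by (auto simp: QP_def)
    note qf = qp_facts[OF W ab]
    have tab: "\<tau> a \<noteq> \<tau> b" using ab P by auto
    have mmlt: "fst (mm (\<tau> a) (\<tau> b)) < snd (mm (\<tau> a) (\<tau> b))" using tab by (auto simp: mm_def min_def max_def)
    have pp: "pr (relabel Q \<sigma> \<tau> G) (\<tau> a) \<noteq> \<tau> b" "pr (relabel Q \<sigma> \<tau> G) (\<tau> b) \<noteq> \<tau> a"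
      using ab qf by (auto simp: prR P)
    have lt: "\<tau> a < nh G" "\<tau> b < nh G" using ab P by auto
    show "mm (\<tau> (fst q)) (\<tau> (snd q)) \<in> QP (relabel Q \<sigma> \<tau> G)"
      unfolding qab using mmlt pp lt by (auto simp: QP_def mm_def min_def max_def relabel_simps(2))
  qed
  show "(\<lambda>q. mm (inv \<tau> (fst q)) (inv \<tau> (snd q))) ` QP (relabel Q \<sigma> \<tau> G) \<subseteq> QP G"
  proof (rule image_subsetI)
    fix q assume q: "q \<in> QP (relabel Q \<sigma> \<tau> G)"
    obtain a b where qab: "q = (a, b)" by force
    have ab: "a < nh G" "b < nh G" "a \<noteq> b" "\<tau> (pr G (inv \<tau> a)) \<noteq> b"
      using q qab by (auto simp: QP_def relabel_simps)
    have x: "pr G (inv \<tau> a) \<noteq> inv \<tau> b" using ab(4) P by metis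
    have y: "pr G (inv \<tau> b) \<noteq> inv \<tau> a" using x W ab P by (metis wf_prpr)
    have ne: "inv \<tau> a \<noteq> inv \<tau> b" using ab P by auto
    show "mm (inv \<tau> (fst q)) (inv \<tau> (snd q)) \<in> QP G"
      unfolding qab using ab x y P ne by (auto simp: QP_def mm_def min_def max_def less_le)
  qed
qed

lemma S_relabel:
  assumes W: "wf Q G" and s: "\<sigma> permutes {..<nv G}" and t: "\<tau> permutes {..<nh G}"
  shows "S_graph G - smult (of_int (sign \<sigma> * sign \<tau>)) (S_graph (relabel Q \<sigma> \<tau> G)) \<in> relsp Q"
proof -
  let ?R = "relabel Q \<sigma> \<tau> G"
  let ?e = "(of_int (sign \<sigma> * sign \<tau>)) :: rat"
  let ?phi = "\<lambda>q. mm (\<tau> (fst q)) (\<tau> (snd q))"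
  note P = perm_facts[OF t]
  have eq: "swp ?R (fst (?phi q)) (snd (?phi q)) = relabel Q \<sigma> \<tau> (swp G (fst q) (snd q))" if "q \<in> QP G" for q
  proof -
    obtain a b where q: "q = (a, b)" by force
    have ab: "a < nh G" "b < nh G" "a \<noteq> b" "pr G a \<noteq> b" using that q by (auto simp: QP_def)
    have ba: "b < nh G" "a < nh G" "b \<noteq> a" "pr G b \<noteq> a" using qp_facts[OF W ab] ab by auto
    show ?thesis
    proof (cases "\<tau> a < \<tau> b")
      case True
      then show ?thesis using q relabel_swp[OF W s t ab] by (simp add: mm_def)
    next
      case False
      then have "?phi q = (\<tau> b, \<tau> a)" using q by (auto simp: mm_def)
      then show ?thesis using q relabel_swp[OF W s t ba] swp_comm[OF W ab] by simp
    qed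
  qed
  have "S_graph ?R = smult (1/2) (\<Sum>q\<in>QP G. single (swp ?R (fst (?phi q)) (snd (?phi q))))"
    unfolding S_graph_def using sum.reindex_bij_betw[OF QP_relabel_bij[OF W t, of \<sigma>],
       of "\<lambda>q. single (swp ?R (fst q) (snd q))"] by (simp only:)
  also have "\<dots> = smult (1/2) (\<Sum>q\<in>QP G. single (relabel Q \<sigma> \<tau> (swp G (fst q) (snd q))))"
    using eq by (simp cong: sum.cong)
  finally have SR: "S_graph ?R = \<dots>" .
  have "S_graph G - smult ?e (S_graph ?R) =
    smult (1/2) (\<Sum>q\<in>QP G. single (swp G (fst q) (snd q)) - smult ?e (single (relabel Q \<sigma> \<tau> (swp G (fst q) (snd q)))))"
    unfolding SR unfolding S_graph_def by (simp add: sum_subtractf smult_diff smult_sum[symmetric] mult.commute)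
  also have "\<dots> \<in> relsp Q"
  proof (rule relsp.scale, rule relsp_sum)
    fix q assume q: "q \<in> QP G"
    have ab: "fst q < nh G" "snd q < nh G" "fst q \<noteq> snd q" "pr G (fst q) \<noteq> snd q" using q by (auto simp: QP_def)
    show "single (swp G (fst q) (snd q)) - smult ?e (single (relabel Q \<sigma> \<tau> (swp G (fst q) (snd q)))) \<in> relsp Q"
      by (rule relsp.gen) (use swp_wf[OF W ab] s t in simp_all)
  qed
  finally show ?thesis .
qed

definition rpf :: "'q qgraph \<Rightarrow> nat \<Rightarrow> nat \<Rightarrow> nat \<Rightarrow> nat" where
  "rpf G a b h = (if pr G h = a then pr G b else if pr G h = b then pr G a else pr G h)"

lemma cg_simps:
  "nv (contr_graph Q G a b) = nv G - 1"
  "nh (contr_graph Q G a b) = nh G - 2"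
  "vx (contr_graph Q G a b) h = (if h < nh G - 2 then (if vx G (skip2 a b h) = vx G a \<or> vx G (skip2 a b h) = vx G b then 0
        else Suc (rank2 (vx G a) (vx G b) (vx G (skip2 a b h)))) else 0)"
  "pr (contr_graph Q G a b) h = (if h < nh G - 2 then rank2 a b (rpf G a b (skip2 a b h)) else 0)"
  "st (contr_graph Q G a b) w = (if w = 0 then tr Q (rank2 a b) (mate Q a (st G (vx G a)) b (st G (vx G b)))
                     else if w < nv G - 1 then tr Q (rank2 a b) (st G (skip2 (vx G a) (vx G b) (w - 1)))
                     else undefined)"
  by (simp_all add: contr_graph_def Let_def rpf_def)

lemma contr_eq: "contr Q G a b = smult (fsign (vx G a) (vx G b) * fsign a b) (single (contr_graph Q G a b))"
  by (simp add: contr_def)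

lemma contr_graph_swp_self:
  assumes W: "wf Q G" and ab: "a < nh G" "b < nh G" "a \<noteq> b" "pr G a \<noteq> b"
  shows "contr_graph Q (swp G a b) a b = contr_graph Q G a b"
proof (rule qg_eq)
  note q = qp_facts[OF W ab]
  have r: "rpf (swp G a b) a b k = rpf G a b k" if "k \<noteq> a" "k \<noteq> b" "k < nh G" for k
  proof -
    have "pr G k = a \<longleftrightarrow> k = pr G a" "pr G k = b \<longleftrightarrow> k = pr G b"
      using that q ab wf_prpr[OF W] by metis+
    then show ?thesis using that q ab unfolding rpf_def swp_pr by auto
  qed
  show "pr (contr_graph Q (swp G a b) a b) = pr (contr_graph Q G a b)"
  proof
    fix h
    show "pr (contr_graph Q (swp G a b) a b) h = pr (contr_graph Q G a b) h"
      unfolding cg_simps swp_simps using r[OF skip_neq1[OF ab(3)] skip_neq2[OF ab(3)] skip_lt[OF ab(3)]] ab by auto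
  qed
qed (simp_all add: cg_simps fun_eq_iff)

lemma contr_swp_self:
  assumes W: "wf Q G" and ab: "a < nh G" "b < nh G" "a \<noteq> b" "pr G a \<noteq> b"
  shows "contr Q (swp G a b) a b = contr Q G a b"
  using contr_graph_swp_self[OF assms] by (simp add: contr_eq)

lemma contr_graph_swp_disj:
  assumes W: "wf Q G" and ab: "a < nh G" "b < nh G" "a \<noteq> b" "pr G a \<noteq> b"
    and cd: "c < nh G" "d < nh G" "c \<noteq> d" "pr G c = d" and disj: "a \<noteq> c" "a \<noteq> d" "b \<noteq> c" "b \<noteq> d"
  shows "contr_graph Q (swp G a b) c d = swp (contr_graph Q G c d) (rank2 c d a) (rank2 c d b)"
proof (rule qg_eq)
  note q = qp_facts[OF W ab]
  have pd: "pr G d = c" using cd wf_prpr[OF W] by metis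
  have nq: "pr G a \<noteq> c" "pr G a \<noteq> d" "pr G b \<noteq> c" "pr G b \<noteq> d"
    using disj cd pd q by metis+
  have rG: "rpf G c d k = pr G k" if "k \<noteq> c" "k \<noteq> d" "k < nh G" for k
    using that cd pd wf_prpr[OF W] unfolding rpf_def by metis
  have psw_c: "pr (swp G a b) c = d" "pr (swp G a b) d = c" using disj nq cd pd by (auto simp: swp_pr)
  have rS: "rpf (swp G a b) c d k = pr (swp G a b) k" if "k \<noteq> c" "k \<noteq> d" "k < nh G" for k
  proof -
    have "pr (swp G a b) k \<noteq> c" "pr (swp G a b) k \<noteq> d"
      using that psw_c wf_prpr[OF swp_wf[OF W ab]] by (metis swp_simps(2))+
    then show ?thesis unfolding rpf_def by simp
  qed
  let ?K = "contr_graph Q G c d"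
  let ?r = "rank2 c d"
  let ?s = "skip2 c d"
  note RS = skip_rank[OF cd(3)] rank_skip[OF cd(3)] skip_neq1[OF cd(3)] skip_neq2[OF cd(3)]
  have prK: "pr ?K h = ?r (pr G (?s h))" if "h < nh G - 2" for h
    using that rG[OF skip_neq1[OF cd(3)] skip_neq2[OF cd(3)] skip_lt[OF cd(3) that cd(1,2)]] by (simp add: cg_simps)
  have ra: "?r a < nh G - 2" "?r b < nh G - 2" "?r (pr G a) < nh G - 2" "?r (pr G b) < nh G - 2"
    using rank_lt[OF cd(3)] ab cd disj nq q by auto
  have prKa: "pr ?K (?r a) = ?r (pr G a)" "pr ?K (?r b) = ?r (pr G b)"
    using prK ra RS disj by auto
  show "pr (contr_graph Q (swp G a b) c d) = pr (swp ?K (?r a) (?r b))"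
  proof
    fix h
    show "pr (contr_graph Q (swp G a b) c d) h = pr (swp ?K (?r a) (?r b)) h"
    proof (cases "h < nh G - 2")
      case True
      let ?k = "?s h"
      have k: "?k \<noteq> c" "?k \<noteq> d" "?k < nh G" using RS skip_lt[OF cd(3) True cd(1,2)] by auto
      have iff: "h = ?r x \<longleftrightarrow> ?k = x" if "x \<noteq> c" "x \<noteq> d" for x
        using RS that by metis
      have L: "pr (contr_graph Q (swp G a b) c d) h = ?r (pr (swp G a b) ?k)"
        using True rS[OF k] by (simp add: cg_simps)
      have R: "pr (swp ?K (?r a) (?r b)) h = (if h = ?r a then ?r b else if h = ?r b then ?r a
          else if h = ?r (pr G a) then ?r (pr G b) else if h = ?r (pr G b) then ?r (pr G a) else ?r (pr G ?k))"
        unfolding swp_pr prKa prK[OF True] by simp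
      have i1: "h = ?r a \<longleftrightarrow> ?k = a" by (rule iff) (use disj in auto)
      have i2: "h = ?r b \<longleftrightarrow> ?k = b" by (rule iff) (use disj in auto)
      have i3: "h = ?r (pr G a) \<longleftrightarrow> ?k = pr G a" by (rule iff) (use nq in auto)
      have i4: "h = ?r (pr G b) \<longleftrightarrow> ?k = pr G b" by (rule iff) (use nq in auto)
      show ?thesis unfolding L R i1 i2 i3 i4 swp_pr[of G a b] by simp
    next
      case False
      then have "h \<noteq> ?r a" "h \<noteq> ?r b" "h \<noteq> ?r (pr G a)" "h \<noteq> ?r (pr G b)" using ra by auto
      then show ?thesis using False unfolding swp_pr prKa by (simp add: cg_simps)
    qed
  qed
qed (simp_all add: cg_simps fun_eq_iff)

definition Eset :: "'q qgraph \<Rightarrow> (nat \<times> nat) set" where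
  "Eset G = {e. fst e < snd e \<and> snd e < nh G \<and> pr G (fst e) = snd e \<and> vx G (fst e) \<noteq> vx G (snd e)}"

lemma Eset_finite: "finite (Eset G)"
  by (rule finite_subset[of _ "{..<nh G} \<times> {..<nh G}"]) (auto simp: Eset_def)

lemma dE_graph_eq: "dE_graph Q G = (\<Sum>e\<in>Eset G. contr Q G (fst e) (snd e))"
  unfolding dE_graph_def Eset_def by (simp add: split_def)

definition Hq :: "'q species \<Rightarrow> 'q qgraph \<Rightarrow> nat \<times> nat \<Rightarrow> 'q chain" where
  "Hq Q G q = (if vx G (fst q) \<noteq> vx G (snd q) then contr Q G (fst q) (snd q) else 0)"

lemma dH_graph_eq: "dH_graph Q G = (\<Sum>q\<in>QP G. Hq Q G q)"
proof -
  have "dH_graph Q G = (\<Sum>q\<in>{q \<in> QP G. vx G (fst q) \<noteq> vx G (snd q)}. contr Q G (fst q) (snd q))"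
    unfolding dH_graph_def QP_def by (simp add: split_def conj_assoc)
  also have "\<dots> = (\<Sum>q\<in>QP G. Hq Q G q)" unfolding Hq_def by (rule sum.inter_filter[OF QP_finite])
  finally show ?thesis .
qed

definition Rd :: "nat \<times> nat \<Rightarrow> nat \<times> nat \<Rightarrow> bool" where
  "Rd f q \<longleftrightarrow> fst q \<noteq> fst f \<and> fst q \<noteq> snd f \<and> snd q \<noteq> fst f \<and> snd q \<noteq> snd f"

definition fl :: "'q qgraph \<Rightarrow> nat \<times> nat \<Rightarrow> nat \<times> nat" where
  "fl G q = mm (pr G (fst q)) (pr G (snd q))"

lemma QP_D: "q \<in> QP G \<Longrightarrow> fst q < nh G \<and> snd q < nh G \<and> fst q \<noteq> snd q \<and> pr G (fst q) \<noteq> snd q"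
  by (auto simp: QP_def)

lemma fl_QP: assumes W: "wf Q G" and q: "q \<in> QP G" shows "fl G q \<in> QP G" "fl G (fl G q) = q"
proof -
  obtain a b where ab0: "q = (a, b)" by force
  have ab: "a < nh G" "b < nh G" "a \<noteq> b" "pr G a \<noteq> b" using QP_D[OF q] ab0 by auto
  have ab': "a < b" using q ab0 by (simp add: QP_def)
  note f = qp_facts[OF W ab]
  show "fl G q \<in> QP G" using f ab0 by (auto simp: fl_def mm_def QP_def min_def max_def)
  show "fl G (fl G q) = q" using f ab0 ab' by (auto simp: fl_def mm_def min_def max_def)
qed

lemma fl_bij: "wf Q G \<Longrightarrow> bij_betw (fl G) (QP G) (QP G)"
  by (rule bij_betw_byWitness[where f' = "fl G"]) (auto simp: fl_QP)

lemma Eset_swp: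
  assumes W: "wf Q G" and q: "(a, b) \<in> QP G"
  shows "Eset (swp G a b) = ((if vx G a \<noteq> vx G b then {(a, b)} else {}) \<union>
      (if vx G (pr G a) \<noteq> vx G (pr G b) then {fl G (a, b)} else {})) \<union> {f \<in> Eset G. Rd f (a, b)}"
proof -
  have ab: "a < nh G" "b < nh G" "a \<noteq> b" "pr G a \<noteq> b" using QP_D[OF q] by auto
  have ab': "a < b" using q by (simp add: QP_def)
  note f = qp_facts[OF W ab]
  have flab: "fl G (a, b) = (if pr G a < pr G b then (pr G a, pr G b) else (pr G b, pr G a))"
    using f by (auto simp: fl_def mm_def min_def max_def)
  let ?p = "pr (swp G a b)"
  have pa: "?p a = b" "?p b = a" "?p (pr G a) = pr G b" "?p (pr G b) = pr G a"
    using f ab by (auto simp: swp_pr)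
  have po: "?p c = pr G c" if "c \<noteq> a" "c \<noteq> b" "c \<noteq> pr G a" "c \<noteq> pr G b" for c
    using that by (simp add: swp_pr)
  show ?thesis
  proof (rule set_eqI)
    fix e :: "nat \<times> nat"
    obtain c d where e: "e = (c, d)" by force
    have pd: "c < nh G \<Longrightarrow> pr G c = d \<Longrightarrow> pr G d = c" using wf_prpr[OF W] by metis
    show "e \<in> Eset (swp G a b) \<longleftrightarrow> e \<in> ((if vx G a \<noteq> vx G b then {(a, b)} else {}) \<union>
      (if vx G (pr G a) \<noteq> vx G (pr G b) then {fl G (a, b)} else {})) \<union> {f \<in> Eset G. Rd f (a, b)}"
    proof
      assume "e \<in> Eset (swp G a b)"
      then have E: "c < d" "d < nh G" "?p c = d" "vx G c \<noteq> vx G d" using e by (auto simp: Eset_def)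
      consider "c = a" | "c = b" | "c = pr G a" | "c = pr G b" | "c \<noteq> a" "c \<noteq> b" "c \<noteq> pr G a" "c \<noteq> pr G b" by blast
      then show "e \<in> ((if vx G a \<noteq> vx G b then {(a, b)} else {}) \<union>
        (if vx G (pr G a) \<noteq> vx G (pr G b) then {fl G (a, b)} else {})) \<union> {f \<in> Eset G. Rd f (a, b)}"
      proof cases
        case 1 then show ?thesis using E e pa by auto
      next
        case 2 then show ?thesis using E e pa ab' by auto
      next
        case 3 then show ?thesis using E e pa flab by auto
      next
        case 4 then show ?thesis using E e pa flab by auto
      next
        case 5
        have d: "d = pr G c" using E po[OF 5] by simp
        have c: "c < nh G" using E by simp
        have "d \<noteq> a" "d \<noteq> b" using d 5 f wf_prpr[OF W c] by metis+
        then show ?thesis using E e 5 d po[OF 5] by (auto simp: Eset_def Rd_def)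
      qed
    next
      assume "e \<in> ((if vx G a \<noteq> vx G b then {(a, b)} else {}) \<union>
        (if vx G (pr G a) \<noteq> vx G (pr G b) then {fl G (a, b)} else {})) \<union> {f \<in> Eset G. Rd f (a, b)}"
      then consider "e = (a, b)" "vx G a \<noteq> vx G b" | "e = fl G (a, b)" "vx G (pr G a) \<noteq> vx G (pr G b)"
        | "e \<in> Eset G" "Rd e (a, b)" by (auto split: if_splits)
      then show "e \<in> Eset (swp G a b)"
      proof cases
        case 1 then show ?thesis using ab ab' pa by (auto simp: Eset_def)
      next
        case 2 then show ?thesis using f pa flab by (auto simp: Eset_def split: if_splits)
      next
        case 3
        have E: "c < d" "d < nh G" "pr G c = d" "vx G c \<noteq> vx G d" using 3 e by (auto simp: Eset_def)
        have r: "a \<noteq> c" "a \<noteq> d" "b \<noteq> c" "b \<noteq> d" using 3 e by (auto simp: Rd_def)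
        have "c \<noteq> pr G a" "c \<noteq> pr G b" using r E pd f by metis+
        then have "?p c = d" using po r E by simp
        then show ?thesis using E e by (auto simp: Eset_def)
      qed
    qed
  qed
qed

lemma dE_swp:
  assumes W: "wf Q G" and q: "(a, b) \<in> QP G"
  shows "dE_graph Q (swp G a b) = Hq Q G (a, b) + Hq Q G (fl G (a, b)) +
     (\<Sum>f\<in>{f \<in> Eset G. Rd f (a, b)}. contr Q (swp G a b) (fst f) (snd f))"
proof -
  have ab: "a < nh G" "b < nh G" "a \<noteq> b" "pr G a \<noteq> b" using QP_D[OF q] by auto
  have ab': "a < b" using q by (simp add: QP_def)
  note f = qp_facts[OF W ab]
  let ?A = "if vx G a \<noteq> vx G b then {(a, b)} else {}"
  let ?B = "if vx G (pr G a) \<noteq> vx G (pr G b) then {fl G (a, b)} else {}"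
  let ?C = "{f \<in> Eset G. Rd f (a, b)}"
  let ?g = "\<lambda>e. contr Q (swp G a b) (fst e) (snd e)"
  have d1: "?A \<inter> ?B = {}" using f by (auto simp: fl_def mm_def min_def max_def)
  have d2: "(?A \<union> ?B) \<inter> ?C = {}" using f by (auto simp: fl_def mm_def min_def max_def Rd_def Eset_def)
  have fC: "finite ?C" by (rule finite_subset[OF _ Eset_finite[of G]]) auto
  have "dE_graph Q (swp G a b) = sum ?g (?A \<union> ?B) + sum ?g ?C"
    unfolding dE_graph_eq Eset_swp[OF W q] by (rule sum.union_disjoint) (use d2 fC in auto)
  also have "sum ?g (?A \<union> ?B) = sum ?g ?A + sum ?g ?B" by (rule sum.union_disjoint) (use d1 in auto)
  also have "sum ?g ?A = Hq Q G (a, b)" using contr_swp_self[OF W ab] by (simp add: Hq_def)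
  also have "sum ?g ?B = Hq Q G (fl G (a, b))"
  proof -
    have flq: "fl G (a, b) \<in> QP G" by (rule fl_QP[OF W q])
    obtain c d where cd: "fl G (a, b) = (c, d)" by force
    have cd': "c < nh G" "d < nh G" "c \<noteq> d" "pr G c \<noteq> d" using QP_D[OF flq] cd by auto
    have "swp G c d = swp G a b"
    proof (cases "pr G a < pr G b")
      case True
      then have "c = pr G a" "d = pr G b" using cd by (auto simp: fl_def mm_def)
      then show ?thesis using swp_flip[OF W ab] by simp
    next
      case False
      then have "c = pr G b" "d = pr G a" using cd f by (auto simp: fl_def mm_def min_def max_def)
      then show ?thesis using swp_flip[OF W ab] swp_comm[OF W cd'] by simp
    qed
    then have "contr Q (swp G a b) c d = contr Q G c d" using contr_swp_self[OF W cd'] by simp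
    moreover have "vx G c \<noteq> vx G d \<longleftrightarrow> vx G (pr G a) \<noteq> vx G (pr G b)"
      using cd by (cases "pr G a \<le> pr G b") (auto simp: fl_def mm_def min_def max_def)
    ultimately show ?thesis using cd by (simp add: Hq_def)
  qed
  finally show ?thesis .
qed

lemma cg_pr_edge:
  assumes W: "wf Q G" and cd: "c < nh G" "d < nh G" "c \<noteq> d" "pr G c = d" and h: "h < nh G - 2"
  shows "pr (contr_graph Q G c d) h = rank2 c d (pr G (skip2 c d h))"
proof -
  have pd: "pr G d = c" using cd wf_prpr[OF W] by metis
  let ?k = "skip2 c d h"
  have k: "?k \<noteq> c" "?k \<noteq> d" "?k < nh G" using skip_neq1[OF cd(3)] skip_neq2[OF cd(3)] skip_lt[OF cd(3) h cd(1,2)] by auto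
  have "rpf G c d ?k = pr G ?k" using k cd pd wf_prpr[OF W] unfolding rpf_def by metis
  then show ?thesis using h by (simp add: cg_simps)
qed

lemma QPd_bij:
  assumes W: "wf Q G" and e: "(c, d) \<in> Eset G"
  shows "bij_betw (\<lambda>q. (rank2 c d (fst q), rank2 c d (snd q))) {q \<in> QP G. Rd (c, d) q} (QP (contr_graph Q G c d))"
proof (rule bij_betw_byWitness[where f' = "\<lambda>q. (skip2 c d (fst q), skip2 c d (snd q))"])
  have cd: "c < nh G" "d < nh G" "c \<noteq> d" "pr G c = d" using e by (auto simp: Eset_def)
  have pd: "pr G d = c" using cd wf_prpr[OF W] by metis
  note RS = skip_rank[OF cd(3)] rank_skip[OF cd(3)] skip_neq1[OF cd(3)] skip_neq2[OF cd(3)]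
  note PK = cg_pr_edge[OF W cd]
  show "\<forall>q\<in>{q \<in> QP G. Rd (c, d) q}. (skip2 c d (fst (rank2 c d (fst q), rank2 c d (snd q))),
      skip2 c d (snd (rank2 c d (fst q), rank2 c d (snd q)))) = q"
    using RS by (auto simp: Rd_def)
  show "\<forall>q\<in>QP (contr_graph Q G c d). (rank2 c d (fst (skip2 c d (fst q), skip2 c d (snd q))),
      rank2 c d (snd (skip2 c d (fst q), skip2 c d (snd q)))) = q"
    using RS by auto
  show "(\<lambda>q. (rank2 c d (fst q), rank2 c d (snd q))) ` {q \<in> QP G. Rd (c, d) q} \<subseteq> QP (contr_graph Q G c d)"
  proof (rule image_subsetI)
    fix q assume qq: "q \<in> {q \<in> QP G. Rd (c, d) q}"
    obtain a b where qab: "q = (a, b)" by force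
    have q: "(a, b) \<in> QP G" and r: "Rd (c, d) (a, b)" using qq qab by auto
    have ab: "a < nh G" "b < nh G" "a \<noteq> b" "pr G a \<noteq> b" using QP_D[OF q] by auto
    have ab': "a < b" using q by (simp add: QP_def)
    have rr: "a \<noteq> c" "a \<noteq> d" "b \<noteq> c" "b \<noteq> d" using r by (auto simp: Rd_def)
    have pa: "pr G a \<noteq> c" "pr G a \<noteq> d" using rr cd pd wf_prpr[OF W ab(1)] by metis+
    have lt: "rank2 c d a < rank2 c d b" by (rule rank_mono[OF cd(3) ab' rr])
    have lt2: "rank2 c d b < nh G - 2" by (rule rank_lt[OF cd(3) ab(2) cd(1,2) rr(3,4)])
    have "pr (contr_graph Q G c d) (rank2 c d a) = rank2 c d (pr G a)"
      using PK[of "rank2 c d a"] lt lt2 RS rr by simp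
    moreover have "rank2 c d (pr G a) \<noteq> rank2 c d b" using rank_inj[OF cd(3) pa rr(3,4)] ab(4) by blast
    ultimately show "(rank2 c d (fst q), rank2 c d (snd q)) \<in> QP (contr_graph Q G c d)"
      using lt lt2 qab by (simp add: QP_def cg_simps)
  qed
  show "(\<lambda>q. (skip2 c d (fst q), skip2 c d (snd q))) ` QP (contr_graph Q G c d) \<subseteq> {q \<in> QP G. Rd (c, d) q}"
  proof (rule image_subsetI)
    fix q assume q: "q \<in> QP (contr_graph Q G c d)"
    obtain a b where qab: "q = (a, b)" by force
    have ab: "a < b" "b < nh G - 2" "pr (contr_graph Q G c d) a \<noteq> b" using q qab by (auto simp: QP_def cg_simps)
    have p: "rank2 c d (pr G (skip2 c d a)) \<noteq> b" using ab PK[of a] by simp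
    have "pr G (skip2 c d a) \<noteq> skip2 c d b" using p RS by metis
    moreover have "skip2 c d a < skip2 c d b" by (rule skip_mono[OF cd(3) ab(1)])
    moreover have "skip2 c d b < nh G" by (rule skip_lt[OF cd(3) ab(2) cd(1,2)])
    ultimately show "(skip2 c d (fst q), skip2 c d (snd q)) \<in> {q \<in> QP G. Rd (c, d) q}"
      using RS qab by (auto simp: QP_def Rd_def)
  qed
qed

lemma S_contr:
  assumes W: "wf Q G" and e: "(c, d) \<in> Eset G"
  shows "S_graph (contr_graph Q G c d) = smult (1/2) (\<Sum>q\<in>{q \<in> QP G. Rd (c, d) q}. single (contr_graph Q (swp G (fst q) (snd q)) c d))"
proof -
  have cd: "c < nh G" "d < nh G" "c \<noteq> d" "pr G c = d" using e by (auto simp: Eset_def)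
  let ?K = "contr_graph Q G c d"
  have "S_graph ?K = smult (1/2) (\<Sum>q\<in>{q \<in> QP G. Rd (c, d) q}. single (swp ?K (rank2 c d (fst q)) (rank2 c d (snd q))))"
    unfolding S_graph_def using sum.reindex_bij_betw[OF QPd_bij[OF W e], of "\<lambda>q. single (swp ?K (fst q) (snd q))"]
    by simp
  also have "\<dots> = smult (1/2) (\<Sum>q\<in>{q \<in> QP G. Rd (c, d) q}. single (contr_graph Q (swp G (fst q) (snd q)) c d))"
  proof -
    have X: "single (swp ?K (rank2 c d (fst q)) (rank2 c d (snd q))) = single (contr_graph Q (swp G (fst q) (snd q)) c d)"
      if q: "q \<in> {q \<in> QP G. Rd (c, d) q}" for q
    proof -
      have qq: "q \<in> QP G" using q by simp
      have ab: "fst q < nh G" "snd q < nh G" "fst q \<noteq> snd q" "pr G (fst q) \<noteq> snd q" using QP_D[OF qq] by auto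
      have r: "fst q \<noteq> c" "fst q \<noteq> d" "snd q \<noteq> c" "snd q \<noteq> d" using q by (auto simp: Rd_def)
      show ?thesis using contr_graph_swp_disj[OF W ab cd r] by simp
    qed
    have "(\<Sum>q\<in>{q \<in> QP G. Rd (c, d) q}. single (swp ?K (rank2 c d (fst q)) (rank2 c d (snd q)))) =
      (\<Sum>q\<in>{q \<in> QP G. Rd (c, d) q}. single (contr_graph Q (swp G (fst q) (snd q)) c d))"
      by (rule sum.cong[OF refl X])
    then show ?thesis by simp
  qed
  finally show ?thesis .
qed

lemma DS_SD:
  assumes W: "wf Q G"
  shows "lin (dE_graph Q) (S_graph G) - lin S_graph (dE_graph Q G) = dH_graph Q G"
proof -
  let ?sw = "\<lambda>q. swp G (fst q) (snd q)"
  let ?Old = "\<lambda>q. (\<Sum>f\<in>{f \<in> Eset G. Rd f q}. contr Q (?sw q) (fst f) (snd f))"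
  have "lin (dE_graph Q) (S_graph G) = smult (1/2) (\<Sum>q\<in>QP G. dE_graph Q (?sw q))"
    unfolding S_graph_def by (simp add: lin_smult fs_sum lin_sum)
  also have "\<dots> = smult (1/2) (\<Sum>q\<in>QP G. Hq Q G q + Hq Q G (fl G q) + ?Old q)"
  proof -
    have "dE_graph Q (?sw q) = Hq Q G q + Hq Q G (fl G q) + ?Old q" if "q \<in> QP G" for q
      using dE_swp[OF W, of "fst q" "snd q"] that by simp
    then show ?thesis by (simp cong: sum.cong)
  qed
  finally have L1: "lin (dE_graph Q) (S_graph G) = smult (1/2) (\<Sum>q\<in>QP G. Hq Q G q + Hq Q G (fl G q) + ?Old q)" .
  have "lin S_graph (dE_graph Q G) = (\<Sum>e\<in>Eset G. smult (fsign (vx G (fst e)) (vx G (snd e)) * fsign (fst e) (snd e))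
       (S_graph (contr_graph Q G (fst e) (snd e))))"
    unfolding dE_graph_eq contr_eq by (simp add: lin_sum lin_smult)
  also have "\<dots> = (\<Sum>e\<in>Eset G. smult (1/2) (\<Sum>q\<in>{q \<in> QP G. Rd e q}. contr Q (?sw q) (fst e) (snd e)))"
  proof (rule sum.cong[OF refl])
    fix e assume e: "e \<in> Eset G"
    show "smult (fsign (vx G (fst e)) (vx G (snd e)) * fsign (fst e) (snd e)) (S_graph (contr_graph Q G (fst e) (snd e))) =
      smult (1/2) (\<Sum>q\<in>{q \<in> QP G. Rd e q}. contr Q (?sw q) (fst e) (snd e))"
      using S_contr[OF W, of "fst e" "snd e"] e by (simp add: contr_eq smult_sum mult.commute)
  qed
  also have "\<dots> = smult (1/2) (\<Sum>e\<in>Eset G. \<Sum>q\<in>{q \<in> QP G. Rd e q}. contr Q (?sw q) (fst e) (snd e))"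
    by (simp add: smult_sum)
  also have "(\<Sum>e\<in>Eset G. \<Sum>q\<in>{q \<in> QP G. Rd e q}. contr Q (?sw q) (fst e) (snd e)) = (\<Sum>q\<in>QP G. ?Old q)"
    by (rule sum.swap_restrict[OF Eset_finite QP_finite])
  finally have L2: "lin S_graph (dE_graph Q G) = smult (1/2) (\<Sum>q\<in>QP G. ?Old q)" .
  have fl: "(\<Sum>q\<in>QP G. Hq Q G (fl G q)) = (\<Sum>q\<in>QP G. Hq Q G q)"
    using sum.reindex_bij_betw[OF fl_bij[OF W], of "Hq Q G"] .
  have "lin (dE_graph Q) (S_graph G) - lin S_graph (dE_graph Q G) =
     smult (1/2) ((\<Sum>q\<in>QP G. Hq Q G q) + (\<Sum>q\<in>QP G. Hq Q G (fl G q)))"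
    unfolding L1 L2 by (simp add: sum.distrib smult_diff[symmetric])
  also have "\<dots> = dH_graph Q G"
  proof -
    have h: "smult (1/2) (X + X) = X" for X :: "'a chain" by (rule ext, simp only: smult_apply fun_add_apply) simp
    show ?thesis unfolding fl dH_graph_eq by (rule h)
  qed
  finally show ?thesis .
qed

lemma fs_contr: "fs (contr Q G a b)" by (simp add: contr_eq)
lemma fs_dE_graph: "fs (dE_graph Q G)" unfolding dE_graph_eq by (rule fs_sum) (simp add: fs_contr)
lemma fs_dH_graph: "fs (dH_graph Q G)" unfolding dH_graph_eq Hq_def by (rule fs_sum) (simp add: fs_contr)

lemma fs_dE: "fs c \<Longrightarrow> fs (dE Q c)" unfolding dE_def by (rule fs_lin) (auto simp: fs_dE_graph)
lemma fs_dH: "fs c \<Longrightarrow> fs (dH Q c)" unfolding dH_def by (rule fs_lin) (auto simp: fs_dH_graph)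

lemma S_gch: "wf Q G \<Longrightarrow> S_graph G \<in> gchains Q"
  unfolding S_graph_def
  by (rule gchains_smult, rule gchains_sum, rule gchains_single, rule swp_wf) (auto dest: QP_D)

lemma S_lin_gch: "x \<in> gchains Q \<Longrightarrow> lin S_graph x \<in> gchains Q"
  by (rule gchains_lin) (auto simp: gchains_fs gchains_wf S_gch)

lemma S_relsp: "r \<in> relsp Q \<Longrightarrow> lin S_graph r \<in> relsp Q"
  by (rule relsp_lin_relsp[OF _ fs_S_graph S_relabel])

lemma dH_DS: assumes x: "x \<in> gchains Q"
  shows "dH Q x = dE Q (lin S_graph x) - lin S_graph (dE Q x)"
proof -
  have fx: "fs x" using x by (rule gchains_fs)
  have "dE Q (lin S_graph x) - lin S_graph (dE Q x) =
     lin (\<lambda>G. lin (dE_graph Q) (S_graph G)) x - lin (\<lambda>G. lin S_graph (dE_graph Q G)) x"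
    unfolding dE_def by (simp add: lin_lin[OF fx] fs_S_graph fs_dE_graph)
  also have "\<dots> = lin (\<lambda>G. lin (dE_graph Q) (S_graph G) - lin S_graph (dE_graph Q G)) x"
    by (rule lin_fun_diff[symmetric])
  also have "\<dots> = lin (dH_graph Q) x"
    by (rule lin_cong) (use DS_SD gchains_wf[OF x] in auto)
  finally show ?thesis by (simp add: dH_def)
qed

lemma part1: assumes x: "x \<in> gchains Q" and c: "dE Q x \<in> relsp Q"
  shows "\<exists>y\<in>gchains Q. dH Q x - dE Q y \<in> relsp Q"
proof (intro bexI)
  show "lin S_graph x \<in> gchains Q" by (rule S_lin_gch[OF x])
  have "dH Q x - dE Q (lin S_graph x) = - lin S_graph (dE Q x)" using dH_DS[OF x] by simp
  also have "\<dots> \<in> relsp Q" by (rule relsp_neg[OF S_relsp[OF c]])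
  finally show "dH Q x - dE Q (lin S_graph x) \<in> relsp Q" .
qed

definition shp :: "nat \<Rightarrow> (nat \<Rightarrow> nat) \<Rightarrow> nat \<Rightarrow> nat" where
  "shp n f v = (if v < n then v else n + f (v - n))"

lemma shp_id: "shp n id = id" by (rule ext) (simp add: shp_def)
lemma shp_comp: "shp n (f \<circ> g) = shp n f \<circ> shp n g" by (rule ext) (simp add: shp_def)

lemma shp_transpose: "shp n (Transposition.transpose a b) = Transposition.transpose (n + a) (n + b)"
  by (rule ext) (auto simp: shp_def Transposition.transpose_def)

lemma shp_perm_sign: assumes p: "p permutes {..<(m::nat)}"
  shows "shp n p permutes {..<n + m} \<and> sign (shp n p) = sign p"
  using p finite_lessThan[of m]
proof (induction rule: permutes_induct)
  case id
  have "shp n (\<lambda>a. a) = (\<lambda>a. a)" by (rule ext) (simp add: shp_def)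
  then show ?case using permutes_id[of "{..<n+m}"] by (simp add: id_def)
next
  case (swap a b p)
  have t: "Transposition.transpose (n + a) (n + b) permutes {..<n + m}"
    by (rule permutes_swap_id) (use swap in auto)
  have pp: "shp n (Transposition.transpose a b \<circ> p) permutes {..<n + m}"
    unfolding shp_comp shp_transpose by (rule permutes_compose[OF _ t]) (use swap in auto)
  have s1: "sign (shp n (Transposition.transpose a b \<circ> p)) = sign (Transposition.transpose (n + a) (n + b)) * sign (shp n p)"
    unfolding shp_comp shp_transpose
    by (rule sign_compose[OF permutation_swap_id]) (use swap permutes_imp_permutation[of "{..<n+m}"] in auto)
  have s2: "sign (Transposition.transpose a b \<circ> p) = sign (Transposition.transpose a b) * sign p"
    by (rule sign_compose[OF permutation_swap_id]) (use swap permutes_imp_permutation[of "{..<m}"] in auto)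
  have "shp n (Transposition.transpose a b \<circ> p) permutes {..<n + m} \<and>
    sign (shp n (Transposition.transpose a b \<circ> p)) = sign (Transposition.transpose a b \<circ> p)"
    using pp s1 s2 swap by (simp add: sign_swap_id)
  then show ?case by (simp add: comp_def)
qed

lemma shp_inv: assumes p: "p permutes {..<(m::nat)}" shows "inv (shp n p) = shp n (inv p)"
  by (rule inv_unique_comp) (simp_all add: shp_comp[symmetric] permutes_inv_o[OF p] shp_id)

definition cyc :: "nat \<Rightarrow> nat \<Rightarrow> nat" where
  "cyc n v = (if v < n then v + 1 else if v = n then 0 else v)"
definition cyci :: "nat \<Rightarrow> nat \<Rightarrow> nat" where
  "cyci n v = (if v = 0 then n else if v \<le> n then v - 1 else v)"

lemma cyc_Suc: "cyc (Suc n) = Transposition.transpose 0 (Suc n) \<circ> cyc n"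
  by (rule ext) (auto simp: cyc_def Transposition.transpose_def)

lemma cyc_perm_sign: "cyc n permutes {..n} \<and> sign (cyc n) = (-1) ^ n"
proof (induction n)
  case 0
  have "cyc 0 = (\<lambda>a. a)" by (rule ext) (simp add: cyc_def)
  then show ?case using permutes_id[of "{..0}"] by (simp add: id_def)
next
  case (Suc n)
  have t: "Transposition.transpose 0 (Suc n) permutes {..Suc n}" by (rule permutes_swap_id) auto
  have c: "cyc n permutes {..Suc n}" using Suc.IH by (auto intro: permutes_subset)
  have pp: "cyc (Suc n) permutes {..Suc n}" unfolding cyc_Suc by (rule permutes_compose[OF c t])
  have "sign (cyc (Suc n)) = sign (Transposition.transpose 0 (Suc n)) * sign (cyc n)"
    unfolding cyc_Suc by (rule sign_compose[OF permutation_swap_id]) (use c permutes_imp_permutation in auto)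
  then show ?case using pp Suc.IH by (simp add: sign_swap_id)
qed

lemma cyc_inv: "inv (cyc n) = cyci n"
  by (rule inv_unique_comp) (auto simp: fun_eq_iff cyc_def cyci_def)

lemma mu_simps:
  "nv (mu_graph Q G1 G2) = nv G1 + nv G2"
  "nh (mu_graph Q G1 G2) = nh G1 + nh G2"
  "vx (mu_graph Q G1 G2) h = (if h < nh G1 then vx G1 h
                 else if h < nh G1 + nh G2 then nv G1 + vx G2 (h - nh G1) else 0)"
  "pr (mu_graph Q G1 G2) h = (if h < nh G1 then pr G1 h
                 else if h < nh G1 + nh G2 then nh G1 + pr G2 (h - nh G1) else 0)"
  "st (mu_graph Q G1 G2) v = (if v < nv G1 then st G1 v
                 else if v < nv G1 + nv G2 then tr Q (\<lambda>h. h + nh G1) (st G2 (v - nv G1))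
                 else undefined)"
  by (simp_all add: mu_graph_def)

lemma hes_mu1: assumes W1: "wf Q G1" and v: "v < nv G1"
  shows "hes (mu_graph Q G1 G2) v = hes G1 v"
  using v wf_vx[OF W1] unfolding hes_def mu_simps by auto

lemma hes_mu2: assumes W1: "wf Q G1" and v: "nv G1 \<le> v"
  shows "hes (mu_graph Q G1 G2) v = (\<lambda>h. h + nh G1) ` hes G2 (v - nv G1)"
proof (rule set_eqI)
  fix h
  show "h \<in> hes (mu_graph Q G1 G2) v \<longleftrightarrow> h \<in> (\<lambda>h. h + nh G1) ` hes G2 (v - nv G1)"
  proof (cases "h < nh G1")
    case True
    then show ?thesis using v wf_vx[OF W1 True] unfolding hes_def mu_simps by auto
  next
    case False
    then have "h = (h - nh G1) + nh G1" by simp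
    then show ?thesis using False v unfolding hes_def mu_simps by (auto simp: image_iff intro: exI[of _ "h - nh G1"])
  qed
qed

context ms
begin

lemma wf_mu: assumes W1: "wf Q G1" and W2: "wf Q G2" shows "wf Q (mu_graph Q G1 G2)"
proof -
  let ?M = "mu_graph Q G1 G2"
  have h1: "vx ?M h < nv ?M \<and> pr ?M h < nh ?M \<and> pr ?M h \<noteq> h \<and> pr ?M (pr ?M h) = h" if "h < nh ?M" for h
  proof (cases "h < nh G1")
    case True
    then show ?thesis using wf_vx[OF W1 True] wf_pr[OF W1 True] wf_prn[OF W1 True] wf_prpr[OF W1 True]
      by (simp add: mu_simps)
  next
    case False
    then have h2: "h - nh G1 < nh G2" using that by (simp add: mu_simps)
    then show ?thesis using False that wf_vx[OF W2 h2] wf_pr[OF W2 h2] wf_prn[OF W2 h2] wf_prpr[OF W2 h2]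
      by (simp add: mu_simps)
  qed
  have h2: "vx ?M h = 0 \<and> pr ?M h = 0" if "nh ?M \<le> h" for h using that by (simp add: mu_simps)
  have h3: "st ?M v \<in> Qs Q (hes ?M v)" if "v < nv ?M" for v
  proof (cases "v < nv G1")
    case True
    then show ?thesis using wf_st[OF W1 True] hes_mu1[OF W1 True] by (simp add: mu_simps)
  next
    case False
    then have v2: "v - nv G1 < nv G2" using that by (simp add: mu_simps)
    have "tr Q (\<lambda>h. h + nh G1) (st G2 (v - nv G1)) \<in> Qs Q ((\<lambda>h. h + nh G1) ` hes G2 (v - nv G1))"
      by (rule tr_Qs[OF hes_finite _ wf_st[OF W2 v2]]) (simp add: inj_on_def)
    then show ?thesis using False that hes_mu2[OF W1, of v G2] by (simp add: mu_simps)
  qed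
  have h4: "st ?M v = undefined" if "nv ?M \<le> v" for v using that by (simp add: mu_simps)
  show ?thesis unfolding wf_def using h1 h2 h3 h4 by blast
qed

lemma mu_relabel1:
  assumes W1: "wf Q G1" and W2: "wf Q G2" and s: "\<sigma> permutes {..<nv G1}" and t: "\<tau> permutes {..<nh G1}"
  shows "mu_graph Q (relabel Q \<sigma> \<tau> G1) G2 = relabel Q \<sigma> \<tau> (mu_graph Q G1 G2)"
proof (rule qg_eq)
  note Pt = perm_facts[OF t] and Ps = perm_facts[OF s]
  have tn: "\<tau> x = x" "inv \<tau> x = x" if "nh G1 \<le> x" for x
    using that permutes_not_in[OF t] permutes_not_in[OF permutes_inv[OF t]] by auto
  have sn: "\<sigma> x = x" "inv \<sigma> x = x" if "nv G1 \<le> x" for x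
    using that permutes_not_in[OF s] permutes_not_in[OF permutes_inv[OF s]] by auto
  show "vx (mu_graph Q (relabel Q \<sigma> \<tau> G1) G2) = vx (relabel Q \<sigma> \<tau> (mu_graph Q G1 G2))"
  proof
    fix h show "vx (mu_graph Q (relabel Q \<sigma> \<tau> G1) G2) h = vx (relabel Q \<sigma> \<tau> (mu_graph Q G1 G2)) h"
      using Pt tn sn by (auto simp: mu_simps relabel_simps)
  qed
  show "pr (mu_graph Q (relabel Q \<sigma> \<tau> G1) G2) = pr (relabel Q \<sigma> \<tau> (mu_graph Q G1 G2))"
  proof
    fix h show "pr (mu_graph Q (relabel Q \<sigma> \<tau> G1) G2) h = pr (relabel Q \<sigma> \<tau> (mu_graph Q G1 G2)) h"
      using Pt tn wf_pr[OF W1] by (auto simp: mu_simps relabel_simps)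
  qed
  show "st (mu_graph Q (relabel Q \<sigma> \<tau> G1) G2) = st (relabel Q \<sigma> \<tau> (mu_graph Q G1 G2))"
  proof
    fix v
    show "st (mu_graph Q (relabel Q \<sigma> \<tau> G1) G2) v = st (relabel Q \<sigma> \<tau> (mu_graph Q G1 G2)) v"
    proof (cases "v < nv G1")
      case True
      then show ?thesis using Ps by (simp add: mu_simps relabel_simps)
    next
      case False
      show ?thesis
      proof (cases "v < nv G1 + nv G2")
        case True
        have v2: "v - nv G1 < nv G2" using True False by simp
        have "tr Q \<tau> (tr Q (\<lambda>h. h + nh G1) (st G2 (v - nv G1))) = tr Q (\<lambda>h. h + nh G1) (st G2 (v - nv G1))"
          by (rule tr_tr[OF hes_finite _ _ wf_st[OF W2 v2]])
             (auto simp: inj_on_def tn intro: inj_on_subset[OF permutes_inj_on[OF t]])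
        then show ?thesis using True False sn by (simp add: mu_simps relabel_simps)
      qed (use False in \<open>simp add: mu_simps relabel_simps\<close>)
    qed
  qed
qed (simp_all add: mu_simps relabel_simps)

lemma mu_relabel2:
  assumes W1: "wf Q G1" and W2: "wf Q G2" and s: "\<sigma> permutes {..<nv G2}" and t: "\<tau> permutes {..<nh G2}"
  shows "mu_graph Q G1 (relabel Q \<sigma> \<tau> G2) = relabel Q (shp (nv G1) \<sigma>) (shp (nh G1) \<tau>) (mu_graph Q G1 G2)"
proof (rule qg_eq)
  note Pt = perm_facts[OF t] and Ps = perm_facts[OF s]
  have it: "inv (shp (nh G1) \<tau>) = shp (nh G1) (inv \<tau>)" by (rule shp_inv[OF t])
  have is': "inv (shp (nv G1) \<sigma>) = shp (nv G1) (inv \<sigma>)" by (rule shp_inv[OF s])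
  show "vx (mu_graph Q G1 (relabel Q \<sigma> \<tau> G2)) = vx (relabel Q (shp (nv G1) \<sigma>) (shp (nh G1) \<tau>) (mu_graph Q G1 G2))"
  proof
    fix h show "vx (mu_graph Q G1 (relabel Q \<sigma> \<tau> G2)) h = vx (relabel Q (shp (nv G1) \<sigma>) (shp (nh G1) \<tau>) (mu_graph Q G1 G2)) h"
      using Pt wf_vx[OF W1] by (auto simp: mu_simps relabel_simps it shp_def)
  qed
  show "pr (mu_graph Q G1 (relabel Q \<sigma> \<tau> G2)) = pr (relabel Q (shp (nv G1) \<sigma>) (shp (nh G1) \<tau>) (mu_graph Q G1 G2))"
  proof
    fix h show "pr (mu_graph Q G1 (relabel Q \<sigma> \<tau> G2)) h = pr (relabel Q (shp (nv G1) \<sigma>) (shp (nh G1) \<tau>) (mu_graph Q G1 G2)) h"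
      using Pt wf_pr[OF W1] by (auto simp: mu_simps relabel_simps it shp_def)
  qed
  show "st (mu_graph Q G1 (relabel Q \<sigma> \<tau> G2)) = st (relabel Q (shp (nv G1) \<sigma>) (shp (nh G1) \<tau>) (mu_graph Q G1 G2))"
  proof
    fix v
    show "st (mu_graph Q G1 (relabel Q \<sigma> \<tau> G2)) v = st (relabel Q (shp (nv G1) \<sigma>) (shp (nh G1) \<tau>) (mu_graph Q G1 G2)) v"
    proof (cases "v < nv G1")
      case True
      have "tr Q (shp (nh G1) \<tau>) (st G1 v) = st G1 v"
        by (rule tr_idS[OF wf_st[OF W1 True]]) (auto simp: shp_def hes_def)
      then show ?thesis using True by (simp add: mu_simps relabel_simps is' shp_def)
    next
      case False
      show ?thesis
      proof (cases "v < nv G1 + nv G2")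
        case True
        have v2: "v - nv G1 < nv G2" using True False by simp
        let ?w = "inv \<sigma> (v - nv G1)"
        have w: "?w < nv G2" using Ps v2 by simp
        have e1: "tr Q (\<lambda>h. h + nh G1) (tr Q \<tau> (st G2 ?w)) = tr Q (\<lambda>h. \<tau> h + nh G1) (st G2 ?w)"
          by (rule tr_tr[OF hes_finite _ _ wf_st[OF W2 w]])
             (auto simp: inj_on_def Pt)
        have e2: "tr Q (shp (nh G1) \<tau>) (tr Q (\<lambda>h. h + nh G1) (st G2 ?w)) = tr Q (\<lambda>h. \<tau> h + nh G1) (st G2 ?w)"
        proof (rule tr_tr[OF hes_finite _ _ wf_st[OF W2 w]])
          show "inj_on (\<lambda>h. h + nh G1) (hes G2 ?w)" by (simp add: inj_on_def)
          show "inj_on (shp (nh G1) \<tau>) ((\<lambda>h. h + nh G1) ` hes G2 ?w)"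
            by (rule permutes_inj_on[OF shp_perm_sign[OF t, THEN conjunct1]])
          show "shp (nh G1) \<tau> (s + nh G1) = \<tau> s + nh G1" for s by (simp add: shp_def)
        qed
        show ?thesis using True False e1 e2 v2 by (simp add: mu_simps relabel_simps is' shp_def Ps w)
      qed (use False in \<open>simp add: mu_simps relabel_simps\<close>)
    qed
  qed
qed (simp_all add: mu_simps relabel_simps)

end

lemma rank_inj_on: "x \<noteq> y \<Longrightarrow> S \<inter> {x, y} = {} \<Longrightarrow> inj_on (rank2 x y) S"
  unfolding inj_on_def using rank_inj by blast

lemma Eset_D: "(a, b) \<in> Eset G \<Longrightarrow> a < b \<and> b < nh G \<and> pr G a = b \<and> vx G a \<noteq> vx G b"
  by (simp add: Eset_def)

context ms
begin

lemma wf_contr: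
  assumes W: "wf Q G" and e: "(a, b) \<in> Eset G"
  shows "wf Q (contr_graph Q G a b)"
proof -
  have ab: "a < b" "b < nh G" "pr G a = b" "vx G a \<noteq> vx G b" using Eset_D[OF e] by auto
  have a: "a < nh G" and ab3: "a \<noteq> b" using ab by auto
  have pb: "pr G b = a" using ab wf_prpr[OF W a] by metis
  let ?i = "vx G a" and ?j = "vx G b"
  have ij: "?i < nv G" "?j < nv G" "?i \<noteq> ?j" using wf_vx[OF W a] wf_vx[OF W ab(2)] ab by auto
  let ?K = "contr_graph Q G a b"
  note RS = skip_rank[OF ab3] rank_skip[OF ab3] skip_neq1[OF ab3] skip_neq2[OF ab3]
  note RSv = skip_rank[OF ij(3)] rank_skip[OF ij(3)] skip_neq1[OF ij(3)] skip_neq2[OF ij(3)]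
  have prk: "pr G k \<noteq> a" "pr G k \<noteq> b" if "k \<noteq> a" "k \<noteq> b" "k < nh G" for k
    using that ab pb wf_prpr[OF W] by metis+
  have PK: "pr ?K h = rank2 a b (pr G (skip2 a b h))" if "h < nh G - 2" for h
    by (rule cg_pr_edge[OF W a ab(2) ab3 ab(3) that])
  have c1: "vx ?K h < nv ?K \<and> pr ?K h < nh ?K \<and> pr ?K h \<noteq> h \<and> pr ?K (pr ?K h) = h" if h: "h < nh ?K" for h
  proof -
    have h': "h < nh G - 2" using h by (simp add: cg_simps)
    let ?k = "skip2 a b h"
    have k: "?k < nh G" "?k \<noteq> a" "?k \<noteq> b" using skip_lt[OF ab3 h' a ab(2)] RS by auto
    have pk: "pr G ?k < nh G" "pr G ?k \<noteq> a" "pr G ?k \<noteq> b" using wf_pr[OF W k(1)] prk[OF k(2,3,1)] by auto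
    have v1: "vx ?K h < nv ?K"
    proof -
      have vk: "vx G ?k < nv G" by (rule wf_vx[OF W k(1)])
      show ?thesis
      proof (cases "vx G ?k = ?i \<or> vx G ?k = ?j")
        case True then show ?thesis using h' ij by (simp add: cg_simps)
      next
        case False
        then have "rank2 ?i ?j (vx G ?k) < nv G - 2" using rank_lt[OF ij(3) vk ij(1,2)] by auto
        then show ?thesis using h' False by (simp add: cg_simps)
      qed
    qed
    have p1: "pr ?K h < nh ?K" using PK[OF h'] rank_lt[OF ab3 pk(1) a ab(2) pk(2,3)] by (simp add: cg_simps)
    have p2: "pr ?K h \<noteq> h"
    proof
      assume "pr ?K h = h"
      then have "rank2 a b (pr G ?k) = rank2 a b ?k" using PK[OF h'] RS by simp
      then have "pr G ?k = ?k" using rank_inj[OF ab3 pk(2,3) k(2,3)] by simp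
      then show False using wf_prn[OF W k(1)] by simp
    qed
    have p3: "pr ?K (pr ?K h) = h"
    proof -
      have l: "pr ?K h < nh G - 2" using p1 by (simp add: cg_simps)
      have "pr ?K (pr ?K h) = rank2 a b (pr G (pr G ?k))" using PK[OF l] PK[OF h'] RS pk by simp
      then show ?thesis using wf_prpr[OF W k(1)] RS by simp
    qed
    show ?thesis using v1 p1 p2 p3 by blast
  qed
  have c2: "vx ?K h = 0 \<and> pr ?K h = 0" if "nh ?K \<le> h" for h using that by (simp add: cg_simps)
  have c3: "st ?K w \<in> Qs Q (hes ?K w)" if w: "w < nv ?K" for w
  proof (cases "w = 0")
    case True
    let ?M = "(hes G ?i - {a}) \<union> (hes G ?j - {b})"
    have hM: "hes ?K 0 = rank2 a b ` ?M"
    proof (rule set_eqI)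
      fix h
      show "h \<in> hes ?K 0 \<longleftrightarrow> h \<in> rank2 a b ` ?M"
      proof
        assume "h \<in> hes ?K 0"
        then have h: "h < nh G - 2" "vx G (skip2 a b h) = ?i \<or> vx G (skip2 a b h) = ?j"
          by (auto simp: hes_def cg_simps split: if_splits)
        have "skip2 a b h \<in> ?M" using h skip_lt[OF ab3 h(1) a ab(2)] RS by (auto simp: hes_def)
        then show "h \<in> rank2 a b ` ?M" using RS by (metis image_eqI)
      next
        assume "h \<in> rank2 a b ` ?M"
        then obtain k where k: "k \<in> ?M" "h = rank2 a b k" by blast
        have k2: "k < nh G" "k \<noteq> a" "k \<noteq> b" "vx G k = ?i \<or> vx G k = ?j" using k ab by (auto simp: hes_def)
        have "h < nh G - 2" using rank_lt[OF ab3 k2(1) a ab(2) k2(2,3)] k by simp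
        then show "h \<in> hes ?K 0" using k RS k2 by (auto simp: hes_def cg_simps)
      qed
    qed
    have mQ: "mate Q a (st G ?i) b (st G ?j) \<in> Qs Q ?M"
      by (rule mate_Qs[OF hes_finite hes_finite _ _ _ wf_st[OF W ij(1)] wf_st[OF W ij(2)]])
         (use ij ab a in \<open>auto simp: hes_def\<close>)
    have "tr Q (rank2 a b) (mate Q a (st G ?i) b (st G ?j)) \<in> Qs Q (rank2 a b ` ?M)"
      by (rule tr_Qs[OF _ rank_inj_on[OF ab3] mQ]) (use ab in \<open>auto simp: hes_finite hes_def\<close>)
    then show ?thesis using True hM by (simp add: cg_simps)
  next
    case False
    let ?u = "skip2 ?i ?j (w - 1)"
    have w1: "w - 1 < nv G - 2" using w False by (simp add: cg_simps)
    have u: "?u < nv G" "?u \<noteq> ?i" "?u \<noteq> ?j" using skip_lt[OF ij(3) w1 ij(1,2)] RSv by auto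
    have hu: "hes ?K w = rank2 a b ` hes G ?u"
    proof (rule set_eqI)
      fix h
      show "h \<in> hes ?K w \<longleftrightarrow> h \<in> rank2 a b ` hes G ?u"
      proof
        assume "h \<in> hes ?K w"
        then have h: "h < nh G - 2" "vx G (skip2 a b h) \<noteq> ?i" "vx G (skip2 a b h) \<noteq> ?j"
          "Suc (rank2 ?i ?j (vx G (skip2 a b h))) = w"
          using False by (auto simp: hes_def cg_simps split: if_splits)
        have "rank2 ?i ?j (vx G (skip2 a b h)) = rank2 ?i ?j ?u" using h(4) RSv by simp
        then have "vx G (skip2 a b h) = ?u" using rank_inj[OF ij(3) h(2,3) u(2,3)] by simp
        then have "skip2 a b h \<in> hes G ?u" using skip_lt[OF ab3 h(1) a ab(2)] by (simp add: hes_def)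
        then show "h \<in> rank2 a b ` hes G ?u" using RS by (metis image_eqI)
      next
        assume "h \<in> rank2 a b ` hes G ?u"
        then obtain k where k: "k \<in> hes G ?u" "h = rank2 a b k" by blast
        have k2: "k < nh G" "vx G k = ?u" using k by (auto simp: hes_def)
        have k3: "k \<noteq> a" "k \<noteq> b" using k2 u by auto
        have "h < nh G - 2" using rank_lt[OF ab3 k2(1) a ab(2) k3] k by simp
        moreover have "Suc (rank2 ?i ?j ?u) = w" using RSv False by simp
        ultimately show "h \<in> hes ?K w" using k RS k2 k3 u by (auto simp: hes_def cg_simps)
      qed
    qed
    have dj: "hes G ?u \<inter> {a, b} = {}" using u by (auto simp: hes_def)
    have "tr Q (rank2 a b) (st G ?u) \<in> Qs Q (rank2 a b ` hes G ?u)"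
      by (rule tr_Qs[OF hes_finite rank_inj_on[OF ab3 dj] wf_st[OF W u(1)]])
    then show ?thesis using False w hu by (simp add: cg_simps)
  qed
  have nv2: "2 \<le> nv G" using ij by arith
  have c4: "st ?K w = undefined" if "nv ?K \<le> w" for w
  proof -
    have "w \<noteq> 0" "\<not> w < nv G - 1" using that nv2 by (auto simp: cg_simps)
    then show ?thesis by (simp add: cg_simps)
  qed
  show ?thesis unfolding wf_def using c1 c2 c3 c4 by blast
qed

end

context ms
begin

lemma contr_mu1:
  assumes W1: "wf Q G1" and W2: "wf Q G2" and e: "(a, b) \<in> Eset G1"
  shows "contr_graph Q (mu_graph Q G1 G2) a b = mu_graph Q (contr_graph Q G1 a b) G2"
proof -
  let ?M = "mu_graph Q G1 G2"
  let ?K = "contr_graph Q G1 a b"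
  have ab: "a < b" "b < nh G1" "pr G1 a = b" "vx G1 a \<noteq> vx G1 b" using Eset_D[OF e] by auto
  have a: "a < nh G1" and ab3: "a \<noteq> b" using ab by auto
  let ?i = "vx G1 a" and ?j = "vx G1 b"
  have ij: "?i < nv G1" "?j < nv G1" "?i \<noteq> ?j" using wf_vx[OF W1 a] wf_vx[OF W1 ab(2)] ab by auto
  have nv2: "2 \<le> nv G1" using ij by arith
  have nh2: "2 \<le> nh G1" using ab by arith
  have WM: "wf Q ?M" by (rule wf_mu[OF W1 W2])
  have vxM: "vx ?M a = ?i" "vx ?M b = ?j" using a ab by (simp_all add: mu_simps)
  have eM: "a < nh ?M" "b < nh ?M" "pr ?M a = b" using a ab by (simp_all add: mu_simps)
  have nhM: "nh ?M = nh G1 + nh G2" "nv ?M = nv G1 + nv G2" by (simp_all add: mu_simps)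
  have nhK: "nh ?K = nh G1 - 2" "nv ?K = nv G1 - 1" by (simp_all add: cg_simps)
  have stM: "st ?M ?i = st G1 ?i" "st ?M ?j = st G1 ?j" using ij by (simp_all add: mu_simps)
  have L_vx: "vx (contr_graph Q ?M a b) h = (if h < nh G1 + nh G2 - 2 then (if vx ?M (skip2 a b h) = ?i \<or> vx ?M (skip2 a b h) = ?j then 0
        else Suc (rank2 ?i ?j (vx ?M (skip2 a b h)))) else 0)" for h
    unfolding cg_simps(3) vxM nhM ..
  have R_vx: "vx (mu_graph Q ?K G2) h = (if h < nh G1 - 2 then vx ?K h
                 else if h < nh G1 - 2 + nh G2 then nv G1 - 1 + vx G2 (h - (nh G1 - 2)) else 0)" for h
    unfolding mu_simps(3) nhK ..
  have L_st: "st (contr_graph Q ?M a b) w = (if w = 0 then tr Q (rank2 a b) (mate Q a (st G1 ?i) b (st G1 ?j))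
                     else if w < nv G1 + nv G2 - 1 then tr Q (rank2 a b) (st ?M (skip2 ?i ?j (w - 1)))
                     else undefined)" for w
    unfolding cg_simps(5) vxM nhM stM ..
  have R_st: "st (mu_graph Q ?K G2) w = (if w < nv G1 - 1 then st ?K w
                 else if w < nv G1 - 1 + nv G2 then tr Q (\<lambda>h. h + (nh G1 - 2)) (st G2 (w - (nv G1 - 1)))
                 else undefined)" for w
    unfolding mu_simps(5) nhK ..
  note RS = skip_rank[OF ab3] rank_skip[OF ab3] skip_neq1[OF ab3] skip_neq2[OF ab3]
  show ?thesis
  proof (rule qg_eq)
    show "nv (contr_graph Q ?M a b) = nv (mu_graph Q ?K G2)"
      using nv2 by (simp add: cg_simps mu_simps)
    show "nh (contr_graph Q ?M a b) = nh (mu_graph Q ?K G2)"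
      using nh2 by (simp add: cg_simps mu_simps)
    show "vx (contr_graph Q ?M a b) = vx (mu_graph Q ?K G2)"
    proof
      fix h
      show "vx (contr_graph Q ?M a b) h = vx (mu_graph Q ?K G2) h"
      proof (cases "h < nh G1 - 2")
        case True
        have k: "skip2 a b h < nh G1" by (rule skip_lt[OF ab3 True a ab(2)])
        have vk: "vx ?M (skip2 a b h) = vx G1 (skip2 a b h)" using k by (simp add: mu_simps)
        have h2: "h < nh G1 + nh G2 - 2" using True by arith
        show ?thesis unfolding L_vx R_vx vk using True h2 by (simp add: cg_simps)
      next
        case False
        have sk: "skip2 a b h = h + 2" by (rule skip_above[OF ab3]) (use False ab in auto)
        define t where "t = h - (nh G1 - 2)"
        show ?thesis
        proof (cases "h < nh G1 + nh G2 - 2")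
          case True
          have hh: "\<not> h + 2 < nh G1" "h + 2 < nh G1 + nh G2" "h + 2 - nh G1 = t" "h < nh G1 - 2 + nh G2"
            using False True nh2 unfolding t_def by arith+
          have vk: "vx ?M (skip2 a b h) = nv G1 + vx G2 t" unfolding sk mu_simps(3) using hh by simp
          have v: "nv G1 + vx G2 t \<noteq> ?i" "nv G1 + vx G2 t \<noteq> ?j" using ij by auto
          have r: "rank2 ?i ?j (nv G1 + vx G2 t) = nv G1 + vx G2 t - 2"
            by (rule rank_above[OF ij(3)]) (use ij in auto)
          have n1: "Suc (nv G1 + vx G2 t - 2) = nv G1 - 1 + vx G2 t" using nv2 by arith
          show ?thesis unfolding L_vx R_vx vk t_def[symmetric] using True False hh(4) v r n1 by simp
        next
          case False2: False
          then have "\<not> h < nh G1 - 2 + nh G2" using nh2 by arith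
          then show ?thesis unfolding L_vx R_vx using False False2 by simp
        qed
      qed
    qed
    show "pr (contr_graph Q ?M a b) = pr (mu_graph Q ?K G2)"
    proof
      fix h
      show "pr (contr_graph Q ?M a b) h = pr (mu_graph Q ?K G2) h"
      proof (cases "h < nh G1 + nh G2 - 2")
        case hlt: True
        have PM: "pr (contr_graph Q ?M a b) h = rank2 a b (pr ?M (skip2 a b h))"
          by (rule cg_pr_edge[OF WM eM(1,2) ab3 eM(3)]) (use hlt in \<open>simp add: mu_simps\<close>)
        show ?thesis
        proof (cases "h < nh G1 - 2")
          case True
          have k: "skip2 a b h < nh G1" by (rule skip_lt[OF ab3 True a ab(2)])
          have P1: "pr ?K h = rank2 a b (pr G1 (skip2 a b h))"
            by (rule cg_pr_edge[OF W1 a ab(2) ab3 ab(3) True])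
          have pk: "pr ?M (skip2 a b h) = pr G1 (skip2 a b h)" using k by (simp add: mu_simps)
          have R: "pr (mu_graph Q ?K G2) h = pr ?K h" using True by (simp add: mu_simps(4) nhK)
          show ?thesis unfolding PM R P1 pk ..
        next
          case False
          have sk: "skip2 a b h = h + 2" by (rule skip_above[OF ab3]) (use False ab in auto)
          define t where "t = h - (nh G1 - 2)"
          have hh: "\<not> h + 2 < nh G1" "h + 2 < nh G1 + nh G2" "h + 2 - nh G1 = t" "h < nh G1 - 2 + nh G2"
            using False hlt nh2 unfolding t_def by arith+
          have pk: "pr ?M (skip2 a b h) = nh G1 + pr G2 t" unfolding sk mu_simps(4) using hh by simp
          have r: "rank2 a b (nh G1 + pr G2 t) = nh G1 + pr G2 t - 2"
            by (rule rank_above[OF ab3]) (use ab in auto)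
          have n1: "nh G1 + pr G2 t - 2 = nh G1 - 2 + pr G2 t" using nh2 by arith
          have R: "pr (mu_graph Q ?K G2) h = nh G1 - 2 + pr G2 t"
            unfolding mu_simps(4) nhK t_def using False hh(4) by simp
          show ?thesis unfolding PM R pk r n1 ..
        qed
      next
        case False
        then have "\<not> h < nh G1 - 2 + nh G2" "\<not> h < nh G1 - 2" using nh2 by arith+
        then show ?thesis using False by (simp add: cg_simps(4) mu_simps(4) nhK nhM)
      qed
    qed
    show "st (contr_graph Q ?M a b) = st (mu_graph Q ?K G2)"
    proof
      fix w
      show "st (contr_graph Q ?M a b) w = st (mu_graph Q ?K G2) w"
      proof (cases "w = 0")
        case True
        have "0 < nv G1 - 1" using nv2 by arith
        then show ?thesis unfolding L_st R_st using True by (simp add: cg_simps(5))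
      next
        case w0: False
        show ?thesis
        proof (cases "w < nv G1 - 1")
          case True
          have u: "skip2 ?i ?j (w - 1) < nv G1" by (rule skip_lt[OF ij(3)]) (use True w0 ij in auto)
          have sM: "st ?M (skip2 ?i ?j (w - 1)) = st G1 (skip2 ?i ?j (w - 1))" using u by (simp add: mu_simps)
          have w2: "w < nv G1 + nv G2 - 1" using True by arith
          have RK: "st ?K w = tr Q (rank2 a b) (st G1 (skip2 ?i ?j (w - 1)))" using w0 True by (simp add: cg_simps(5))
          show ?thesis unfolding L_st R_st sM RK using True w0 w2 by simp
        next
          case False
          show ?thesis
          proof (cases "w < nv G1 + nv G2 - 1")
            case True
            have sk: "skip2 ?i ?j (w - 1) = w + 1" using skip_above[OF ij(3), of "w - 1"] False ij w0 by auto
            define t where "t = w + 1 - nv G1"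
            have w2: "t < nv G2" "w - (nv G1 - 1) = t" "w < nv G1 - 1 + nv G2"
              "\<not> w + 1 < nv G1" "w + 1 < nv G1 + nv G2"
              using True False nv2 unfolding t_def by arith+
            have sM: "st ?M (w + 1) = tr Q (\<lambda>h. h + nh G1) (st G2 t)"
              unfolding mu_simps(5) t_def using w2 by simp
            let ?x = "st G2 t"
            have tt: "tr Q (rank2 a b) (tr Q (\<lambda>h. h + nh G1) ?x) = tr Q (\<lambda>h. h + (nh G1 - 2)) ?x"
            proof (rule tr_tr[OF hes_finite _ _ wf_st[OF W2 w2(1)]])
              show "inj_on (\<lambda>h. h + nh G1) (hes G2 t)" by (simp add: inj_on_def)
              show "inj_on (rank2 a b) ((\<lambda>h. h + nh G1) ` hes G2 t)"
                by (rule rank_inj_on[OF ab3]) (use ab in auto)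
              show "rank2 a b (s + nh G1) = s + (nh G1 - 2)" for s
                using rank_above[OF ab3, of "s + nh G1"] ab nh2 by auto
            qed
            show ?thesis unfolding L_st R_st sk sM tt w2(2) using w0 True False w2(3) by simp
          next
            case False2: False
            then have "\<not> w < nv G1 - 1 + nv G2" using nv2 by arith
            then show ?thesis unfolding L_st R_st using False w0 False2 by simp
          qed
        qed
      qed
    qed
  qed
qed

end

context ms
begin

lemma tr_shift_rank:
  assumes ab: "a \<noteq> b" and S: "finite S" "S \<inter> {a, b} = {}" and x: "x \<in> Qs Q S"
  shows "tr Q (rank2 (n + a) (n + b)) (tr Q (\<lambda>h. h + n) x) = tr Q (\<lambda>h. h + n) (tr Q (rank2 a b) x)"
proof -
  have ab': "n + a \<noteq> n + b" using ab by simp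
  have "tr Q (rank2 (n + a) (n + b)) (tr Q (\<lambda>h. h + n) x) = tr Q (\<lambda>s. rank2 a b s + n) x"
  proof (rule tr_tr[OF S(1) _ _ x])
    show "inj_on (\<lambda>h. h + n) S" by (simp add: inj_on_def)
    show "inj_on (rank2 (n + a) (n + b)) ((\<lambda>h. h + n) ` S)" by (rule rank_inj_on[OF ab']) (use S in auto)
    show "rank2 (n + a) (n + b) (s + n) = rank2 a b s + n" for s
      using rank_shift[OF ab, of n s] by (simp add: add.commute)
  qed
  also have "\<dots> = tr Q (\<lambda>h. h + n) (tr Q (rank2 a b) x)"
    by (rule tr_tr[OF S(1) rank_inj_on[OF ab S(2)] _ x, symmetric]) (simp_all add: inj_on_def)
  finally show ?thesis .
qed

lemma contr_mu2:
  assumes W1: "wf Q G1" and W2: "wf Q G2" and e: "(a, b) \<in> Eset G2"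
  shows "contr_graph Q (mu_graph Q G1 G2) (nh G1 + a) (nh G1 + b) =
         relabel Q (cyc (nv G1)) id (mu_graph Q G1 (contr_graph Q G2 a b))"
proof -
  let ?M = "mu_graph Q G1 G2"
  let ?K2 = "contr_graph Q G2 a b"
  let ?K = "mu_graph Q G1 ?K2"
  let ?n = "nv G1" and ?h = "nh G1"
  have ab: "a < b" "b < nh G2" "pr G2 a = b" "vx G2 a \<noteq> vx G2 b" using Eset_D[OF e] by auto
  have a: "a < nh G2" and ab3: "a \<noteq> b" using ab by auto
  have ab3': "?h + a \<noteq> ?h + b" using ab3 by simp
  let ?i = "vx G2 a" and ?j = "vx G2 b"
  have ij: "?i < nv G2" "?j < nv G2" "?i \<noteq> ?j" using wf_vx[OF W2 a] wf_vx[OF W2 ab(2)] ab by auto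
  have ij3: "?n + ?i \<noteq> ?n + ?j" using ij by simp
  have nv2: "2 \<le> nv G2" using ij by arith
  have nh2: "2 \<le> nh G2" using ab by arith
  have WM: "wf Q ?M" by (rule wf_mu[OF W1 W2])
  have WK: "wf Q ?K" by (rule wf_mu[OF W1 wf_contr[OF W2 e]])
  have vxM: "vx ?M (?h + a) = ?n + ?i" "vx ?M (?h + b) = ?n + ?j" using a ab by (simp_all add: mu_simps)
  have eM: "?h + a < nh ?M" "?h + b < nh ?M" "pr ?M (?h + a) = ?h + b" using a ab by (simp_all add: mu_simps)
  have nhM: "nh ?M = ?h + nh G2" "nv ?M = ?n + nv G2" by (simp_all add: mu_simps)
  have nhK: "nh ?K = ?h + (nh G2 - 2)" "nv ?K = ?n + (nv G2 - 1)" by (simp_all add: cg_simps mu_simps)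
  have stM: "st ?M (?n + ?i) = tr Q (\<lambda>h. h + ?h) (st G2 ?i)" "st ?M (?n + ?j) = tr Q (\<lambda>h. h + ?h) (st G2 ?j)"
    using ij by (simp_all add: mu_simps)
  have L_vx: "vx (contr_graph Q ?M (?h + a) (?h + b)) h = (if h < ?h + nh G2 - 2 then
       (if vx ?M (skip2 (?h + a) (?h + b) h) = ?n + ?i \<or> vx ?M (skip2 (?h + a) (?h + b) h) = ?n + ?j then 0
        else Suc (rank2 (?n + ?i) (?n + ?j) (vx ?M (skip2 (?h + a) (?h + b) h)))) else 0)" for h
    unfolding cg_simps(3) vxM nhM ..
  have R_vx: "vx (relabel Q (cyc ?n) id ?K) h = (if h < ?h + (nh G2 - 2) then cyc ?n (vx ?K h) else 0)" for h
    unfolding relabel_simps(3) nhK by simp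
  have L_st: "st (contr_graph Q ?M (?h + a) (?h + b)) w = (if w = 0 then tr Q (rank2 (?h + a) (?h + b))
         (mate Q (?h + a) (tr Q (\<lambda>h. h + ?h) (st G2 ?i)) (?h + b) (tr Q (\<lambda>h. h + ?h) (st G2 ?j)))
       else if w < ?n + nv G2 - 1 then tr Q (rank2 (?h + a) (?h + b)) (st ?M (skip2 (?n + ?i) (?n + ?j) (w - 1)))
       else undefined)" for w
    unfolding cg_simps(5) vxM nhM stM ..
  have R_st: "st (relabel Q (cyc ?n) id ?K) w = (if w < ?n + (nv G2 - 1) then st ?K (cyci ?n w) else undefined)" for w
  proof (cases "w < ?n + (nv G2 - 1)")
    case True
    have c: "cyci ?n w < nv ?K" using True nv2 unfolding nhK by (auto simp: cyci_def)
    show ?thesis using True tr_id[OF wf_st[OF WK c]] by (simp add: relabel_simps nhK cyc_inv)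
  qed (simp add: relabel_simps nhK)
  show ?thesis
  proof (rule qg_eq)
    show "nv (contr_graph Q ?M (?h + a) (?h + b)) = nv (relabel Q (cyc ?n) id ?K)"
      using nv2 by (simp add: cg_simps mu_simps relabel_simps)
    show "nh (contr_graph Q ?M (?h + a) (?h + b)) = nh (relabel Q (cyc ?n) id ?K)"
      using nh2 by (simp add: cg_simps mu_simps relabel_simps)
    show "vx (contr_graph Q ?M (?h + a) (?h + b)) = vx (relabel Q (cyc ?n) id ?K)"
    proof
      fix h
      show "vx (contr_graph Q ?M (?h + a) (?h + b)) h = vx (relabel Q (cyc ?n) id ?K) h"
      proof (cases "h < ?h")
        case True
        have sk: "skip2 (?h + a) (?h + b) h = h" by (rule skip_low[OF ab3 True])
        have v: "vx G1 h < ?n" by (rule wf_vx[OF W1 True])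
        have vk: "vx ?M h = vx G1 h" "vx ?K h = vx G1 h" using True by (simp_all add: mu_simps)
        have r: "rank2 (?n + ?i) (?n + ?j) (vx G1 h) = vx G1 h" by (rule rank_low[OF ij(3) v])
        have h2: "h < ?h + nh G2 - 2" "h < ?h + (nh G2 - 2)" using True nh2 by arith+
        show ?thesis unfolding L_vx R_vx sk vk r using h2 v by (simp add: cyc_def)
      next
        case False
        define t where "t = h - ?h"
        have ht: "h = ?h + t" using False unfolding t_def by arith
        show ?thesis
        proof (cases "t < nh G2 - 2")
          case True
          have sk: "skip2 (?h + a) (?h + b) h = ?h + skip2 a b t" unfolding ht by (rule skip_shift[OF ab3])
          have k: "skip2 a b t < nh G2" by (rule skip_lt[OF ab3 True a ab(2)])
          have vk: "vx ?M (?h + skip2 a b t) = ?n + vx G2 (skip2 a b t)" using k by (simp add: mu_simps)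
          have h2: "h < ?h + nh G2 - 2" "h < ?h + (nh G2 - 2)" using True ht nh2 by arith+
          have vK: "vx ?K h = ?n + vx ?K2 t" using False h2 unfolding mu_simps(3) t_def cg_simps(2) by simp
          have r: "rank2 (?n + ?i) (?n + ?j) (?n + vx G2 (skip2 a b t)) = ?n + rank2 ?i ?j (vx G2 (skip2 a b t))"
            by (rule rank_shift[OF ij(3)])
          have vK2: "vx ?K2 t = (if vx G2 (skip2 a b t) = ?i \<or> vx G2 (skip2 a b t) = ?j then 0
              else Suc (rank2 ?i ?j (vx G2 (skip2 a b t))))" using True by (simp add: cg_simps)
          show ?thesis unfolding L_vx R_vx sk vk vK r vK2 using h2 by (simp add: cyc_def)
        next
          case False2: False
          then have "\<not> h < ?h + nh G2 - 2" "\<not> h < ?h + (nh G2 - 2)" using ht nh2 by arith+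
          then show ?thesis unfolding L_vx R_vx by simp
        qed
      qed
    qed
    show "pr (contr_graph Q ?M (?h + a) (?h + b)) = pr (relabel Q (cyc ?n) id ?K)"
    proof
      fix h
      have R: "pr (relabel Q (cyc ?n) id ?K) h = (if h < ?h + (nh G2 - 2) then pr ?K h else 0)"
        unfolding relabel_simps(4) nhK by simp
      show "pr (contr_graph Q ?M (?h + a) (?h + b)) h = pr (relabel Q (cyc ?n) id ?K) h"
      proof (cases "h < ?h + nh G2 - 2")
        case hlt: True
        have h2: "h < ?h + (nh G2 - 2)" using hlt nh2 by arith
        have PM: "pr (contr_graph Q ?M (?h + a) (?h + b)) h = rank2 (?h + a) (?h + b) (pr ?M (skip2 (?h + a) (?h + b) h))"
          by (rule cg_pr_edge[OF WM eM(1,2) ab3' eM(3)]) (use hlt in \<open>simp add: mu_simps\<close>)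
        show ?thesis
        proof (cases "h < ?h")
          case True
          have sk: "skip2 (?h + a) (?h + b) h = h" by (rule skip_low[OF ab3 True])
          have p: "pr G1 h < ?h" by (rule wf_pr[OF W1 True])
          have pk: "pr ?M h = pr G1 h" "pr ?K h = pr G1 h" using True by (simp_all add: mu_simps)
          show ?thesis unfolding PM R sk pk rank_low[OF ab3 p] using h2 by simp
        next
          case False
          define t where "t = h - ?h"
          have ht: "h = ?h + t" using False unfolding t_def by arith
          have t2: "t < nh G2 - 2" using ht h2 by arith
          have sk: "skip2 (?h + a) (?h + b) h = ?h + skip2 a b t" unfolding ht by (rule skip_shift[OF ab3])
          have k: "skip2 a b t < nh G2" by (rule skip_lt[OF ab3 t2 a ab(2)])
          have pk: "pr ?M (?h + skip2 a b t) = ?h + pr G2 (skip2 a b t)" using k by (simp add: mu_simps)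
          have pK: "pr ?K h = ?h + pr ?K2 t" using False h2 hlt unfolding mu_simps(4) t_def cg_simps(2) by simp
          have P2: "pr ?K2 t = rank2 a b (pr G2 (skip2 a b t))" by (rule cg_pr_edge[OF W2 a ab(2) ab3 ab(3) t2])
          show ?thesis unfolding PM R sk pk pK P2 rank_shift[OF ab3] using h2 by simp
        qed
      next
        case False
        then have "\<not> h < ?h + (nh G2 - 2)" using nh2 by arith
        then show ?thesis unfolding R using False by (simp add: cg_simps(4) nhM)
      qed
    qed
    show "st (contr_graph Q ?M (?h + a) (?h + b)) = st (relabel Q (cyc ?n) id ?K)"
    proof
      fix w
      show "st (contr_graph Q ?M (?h + a) (?h + b)) w = st (relabel Q (cyc ?n) id ?K) w"
      proof (cases "w = 0")
        case True
        let ?S = "(hes G2 ?i - {a}) \<union> (hes G2 ?j - {b})"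
        have mQ: "mate Q a (st G2 ?i) b (st G2 ?j) \<in> Qs Q ?S"
          by (rule mate_Qs[OF hes_finite hes_finite _ _ _ wf_st[OF W2 ij(1)] wf_st[OF W2 ij(2)]])
             (use ij ab a in \<open>auto simp: hes_def\<close>)
        have me: "mate Q (?h + a) (tr Q (\<lambda>h. h + ?h) (st G2 ?i)) (?h + b) (tr Q (\<lambda>h. h + ?h) (st G2 ?j))
            = tr Q (\<lambda>h. h + ?h) (mate Q a (st G2 ?i) b (st G2 ?j))"
        proof -
          have X: "tr Q (\<lambda>h. h + ?h) (mate Q a (st G2 ?i) b (st G2 ?j)) =
              mate Q (a + ?h) (tr Q (\<lambda>h. h + ?h) (st G2 ?i)) (b + ?h) (tr Q (\<lambda>h. h + ?h) (st G2 ?j))"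
            by (rule mate_eqv[OF hes_finite hes_finite _ _ _ wf_st[OF W2 ij(1)] wf_st[OF W2 ij(2)]])
               (use ij ab a in \<open>auto simp: hes_def inj_on_def\<close>)
          have c: "?h + a = a + ?h" "?h + b = b + ?h" by simp_all
          show ?thesis unfolding c X ..
        qed
        have sdj: "?S \<inter> {a, b} = {}" using ab by (auto simp: hes_def)
        have tt: "tr Q (rank2 (?h + a) (?h + b)) (tr Q (\<lambda>h. h + ?h) (mate Q a (st G2 ?i) b (st G2 ?j)))
            = tr Q (\<lambda>h. h + ?h) (tr Q (rank2 a b) (mate Q a (st G2 ?i) b (st G2 ?j)))"
          by (rule tr_shift_rank[OF ab3 _ sdj mQ]) (simp add: hes_finite)
        have c0: "cyci ?n 0 = ?n" by (simp add: cyci_def)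
        have n0: "0 < ?n + (nv G2 - 1)" "\<not> ?n < ?n" "?n < ?n + (nv G2 - 1)" "?n < ?n + nv G2 - 1" using nv2 by arith+
        have sK: "st ?K ?n = tr Q (\<lambda>h. h + ?h) (st ?K2 0)" using n0 by (simp add: mu_simps cg_simps)
        have sK2: "st ?K2 0 = tr Q (rank2 a b) (mate Q a (st G2 ?i) b (st G2 ?j))" by (simp add: cg_simps)
        show ?thesis unfolding L_st R_st c0 True sK sK2 me tt using n0 by simp
      next
        case w0: False
        show ?thesis
        proof (cases "w \<le> ?n")
          case True
          have w1: "w - 1 < ?n" using True w0 by arith
          have sk: "skip2 (?n + ?i) (?n + ?j) (w - 1) = w - 1" by (rule skip_low[OF ij(3) w1])
          have c: "cyci ?n w = w - 1" using True w0 by (simp add: cyci_def)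
          have sM: "st ?M (w - 1) = st G1 (w - 1)" "st ?K (w - 1) = st G1 (w - 1)" using w1 by (simp_all add: mu_simps)
          have ti: "tr Q (rank2 (?h + a) (?h + b)) (st G1 (w - 1)) = st G1 (w - 1)"
            by (rule tr_idS[OF wf_st[OF W1 w1]]) (use wf_vx[OF W1] in \<open>auto simp: hes_def intro!: rank_low[OF ab3]\<close>)
          have w2: "w < ?n + nv G2 - 1" "w < ?n + (nv G2 - 1)" using True nv2 by arith+
          show ?thesis unfolding L_st R_st sk c sM ti using w0 w2 by simp
        next
          case False
          show ?thesis
          proof (cases "w < ?n + nv G2 - 1")
            case True
            define t where "t = w - 1 - ?n"
            have wt: "w - 1 = ?n + t" "w - ?n = Suc t" using False unfolding t_def by arith+
            have t2: "t < nv G2 - 2" using True False wt unfolding t_def by arith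
            have w2: "w < ?n + (nv G2 - 1)" using True nv2 by arith
            let ?u = "skip2 ?i ?j t"
            have u: "?u < nv G2" "?u \<noteq> ?i" "?u \<noteq> ?j" using skip_lt[OF ij(3) t2 ij(1,2)] skip_neq1[OF ij(3)] skip_neq2[OF ij(3)] by auto
            have sk: "skip2 (?n + ?i) (?n + ?j) (w - 1) = ?n + ?u" unfolding wt by (rule skip_shift[OF ij(3)])
            have c: "cyci ?n w = w" using False by (simp add: cyci_def)
            have sM: "st ?M (?n + ?u) = tr Q (\<lambda>h. h + ?h) (st G2 ?u)" using u by (simp add: mu_simps)
            have sK: "st ?K w = tr Q (\<lambda>h. h + ?h) (st ?K2 (Suc t))" using False w2 wt True by (simp add: mu_simps cg_simps)
            have t3: "Suc t < nv G2 - 1" using t2 by arith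
            have sK2: "st ?K2 (Suc t) = tr Q (rank2 a b) (st G2 ?u)" using t3 by (simp add: cg_simps)
            have sdj: "hes G2 ?u \<inter> {a, b} = {}" using u by (auto simp: hes_def)
            have tt: "tr Q (rank2 (?h + a) (?h + b)) (tr Q (\<lambda>h. h + ?h) (st G2 ?u))
                = tr Q (\<lambda>h. h + ?h) (tr Q (rank2 a b) (st G2 ?u))"
              by (rule tr_shift_rank[OF ab3 hes_finite sdj wf_st[OF W2 u(1)]])
            show ?thesis unfolding L_st R_st sk c sM sK sK2 tt using w0 True w2 by simp
          next
            case False2: False
            then have "\<not> w < ?n + (nv G2 - 1)" using nv2 by arith
            then show ?thesis unfolding L_st R_st using w0 False2 by simp
          qed
        qed
      qed
    qed
  qed
qed

end

lemma Eset_mu: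
  assumes W1: "wf Q G1" and W2: "wf Q G2"
  shows "Eset (mu_graph Q G1 G2) = Eset G1 \<union> (\<lambda>e. (nh G1 + fst e, nh G1 + snd e)) ` Eset G2"
proof (rule set_eqI)
  fix e :: "nat \<times> nat"
  obtain c d where e: "e = (c, d)" by force
  let ?M = "mu_graph Q G1 G2"
  show "e \<in> Eset ?M \<longleftrightarrow> e \<in> Eset G1 \<union> (\<lambda>e. (nh G1 + fst e, nh G1 + snd e)) ` Eset G2"
  proof
    assume "e \<in> Eset ?M"
    then have E: "c < d" "d < nh G1 + nh G2" "pr ?M c = d" "vx ?M c \<noteq> vx ?M d" using e by (auto simp: Eset_def mu_simps)
    show "e \<in> Eset G1 \<union> (\<lambda>e. (nh G1 + fst e, nh G1 + snd e)) ` Eset G2"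
    proof (cases "d < nh G1")
      case True
      then have "c < nh G1" using E by simp
      then show ?thesis using E True e by (auto simp: Eset_def mu_simps)
    next
      case False
      have c: "\<not> c < nh G1"
      proof
        assume c: "c < nh G1"
        then have "pr ?M c = pr G1 c" by (simp add: mu_simps)
        then show False using wf_pr[OF W1 c] E False by simp
      qed
      define c' d' where "c' = c - nh G1" and "d' = d - nh G1"
      have cd: "c = nh G1 + c'" "d = nh G1 + d'" using c False unfolding c'_def d'_def by arith+
      have "(c', d') \<in> Eset G2" using E c False unfolding cd by (auto simp: Eset_def mu_simps)
      then have "e \<in> (\<lambda>e. (nh G1 + fst e, nh G1 + snd e)) ` Eset G2"
        by (rule rev_image_eqI) (use e cd in simp)
      then show ?thesis by blast
    qed
  next
    assume "e \<in> Eset G1 \<union> (\<lambda>e. (nh G1 + fst e, nh G1 + snd e)) ` Eset G2"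
    then show "e \<in> Eset ?M"
    proof
      assume "e \<in> Eset G1"
      then show ?thesis by (auto simp: Eset_def mu_simps)
    next
      assume "e \<in> (\<lambda>e. (nh G1 + fst e, nh G1 + snd e)) ` Eset G2"
      then obtain c' d' where "(c', d') \<in> Eset G2" "e = (nh G1 + c', nh G1 + d')" by auto
      then show ?thesis using wf_pr[OF W2] by (auto simp: Eset_def mu_simps)
    qed
  qed
qed

definition LD :: "'q species \<Rightarrow> 'q qgraph \<Rightarrow> 'q qgraph \<Rightarrow> 'q chain" where
  "LD Q G1 G2 = dE_graph Q (mu_graph Q G1 G2) - lin (\<lambda>G. single (mu_graph Q G G2)) (dE_graph Q G1)
      - smult ((-1) ^ nv G1) (lin (\<lambda>G'. single (mu_graph Q G1 G')) (dE_graph Q G2))"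

context ms
begin

lemma LD_relsp:
  assumes W1: "wf Q G1" and W2: "wf Q G2"
  shows "LD Q G1 G2 \<in> relsp Q"
proof -
  let ?M = "mu_graph Q G1 G2"
  let ?sh = "\<lambda>e. (nh G1 + fst e, nh G1 + snd e)"
  let ?sg = "\<lambda>G e. fsign (vx G (fst e)) (vx G (snd e)) * fsign (fst e) (snd e)"
  have dj: "Eset G1 \<inter> ?sh ` Eset G2 = {}" by (auto simp: Eset_def)
  have inj: "inj_on ?sh (Eset G2)" by (auto simp: inj_on_def)
  have "dE_graph Q ?M = (\<Sum>e\<in>Eset G1. contr Q ?M (fst e) (snd e)) + (\<Sum>e\<in>?sh ` Eset G2. contr Q ?M (fst e) (snd e))"
    unfolding dE_graph_eq Eset_mu[OF W1 W2] by (rule sum.union_disjoint[OF Eset_finite _ dj]) (simp add: Eset_finite)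
  also have "(\<Sum>e\<in>?sh ` Eset G2. contr Q ?M (fst e) (snd e)) = (\<Sum>e\<in>Eset G2. contr Q ?M (nh G1 + fst e) (nh G1 + snd e))"
    by (simp add: sum.reindex[OF inj])
  also have "(\<Sum>e\<in>Eset G1. contr Q ?M (fst e) (snd e)) = (\<Sum>e\<in>Eset G1. smult (?sg G1 e) (single (mu_graph Q (contr_graph Q G1 (fst e) (snd e)) G2)))"
  proof (rule sum.cong[OF refl])
    fix e assume e: "e \<in> Eset G1"
    have e': "(fst e, snd e) \<in> Eset G1" using e by simp
    have lt: "fst e < nh G1" "snd e < nh G1" using e by (auto simp: Eset_def)
    show "contr Q ?M (fst e) (snd e) = smult (?sg G1 e) (single (mu_graph Q (contr_graph Q G1 (fst e) (snd e)) G2))"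
      unfolding contr_eq contr_mu1[OF W1 W2 e'] using lt by (simp add: mu_simps)
  qed
  also have "(\<Sum>e\<in>Eset G2. contr Q ?M (nh G1 + fst e) (nh G1 + snd e)) =
      (\<Sum>e\<in>Eset G2. smult (?sg G2 e) (single (relabel Q (cyc (nv G1)) id (mu_graph Q G1 (contr_graph Q G2 (fst e) (snd e))))))"
  proof (rule sum.cong[OF refl])
    fix e assume e: "e \<in> Eset G2"
    have e': "(fst e, snd e) \<in> Eset G2" using e by simp
    have lt: "fst e < nh G2" "snd e < nh G2" using e by (auto simp: Eset_def)
    show "contr Q ?M (nh G1 + fst e) (nh G1 + snd e) = smult (?sg G2 e) (single (relabel Q (cyc (nv G1)) id (mu_graph Q G1 (contr_graph Q G2 (fst e) (snd e)))))"
      unfolding contr_eq contr_mu2[OF W1 W2 e'] using lt by (simp add: mu_simps fsign_shift)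
  qed
  finally have DM: "dE_graph Q ?M = (\<Sum>e\<in>Eset G1. smult (?sg G1 e) (single (mu_graph Q (contr_graph Q G1 (fst e) (snd e)) G2))) +
      (\<Sum>e\<in>Eset G2. smult (?sg G2 e) (single (relabel Q (cyc (nv G1)) id (mu_graph Q G1 (contr_graph Q G2 (fst e) (snd e))))))" .
  have D1: "lin (\<lambda>G. single (mu_graph Q G G2)) (dE_graph Q G1) =
      (\<Sum>e\<in>Eset G1. smult (?sg G1 e) (single (mu_graph Q (contr_graph Q G1 (fst e) (snd e)) G2)))"
    unfolding dE_graph_eq contr_eq by (rule lin_sum_single)
  have D2: "lin (\<lambda>G'. single (mu_graph Q G1 G')) (dE_graph Q G2) =
      (\<Sum>e\<in>Eset G2. smult (?sg G2 e) (single (mu_graph Q G1 (contr_graph Q G2 (fst e) (snd e)))))"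
    unfolding dE_graph_eq contr_eq by (rule lin_sum_single)
  have "LD Q G1 G2 = (\<Sum>e\<in>Eset G2. smult (?sg G2 e) (single (relabel Q (cyc (nv G1)) id (mu_graph Q G1 (contr_graph Q G2 (fst e) (snd e)))))
      - smult ((-1) ^ nv G1) (smult (?sg G2 e) (single (mu_graph Q G1 (contr_graph Q G2 (fst e) (snd e))))))"
    unfolding LD_def DM D1 D2 by (simp add: sum_subtractf smult_sum)
  also have "\<dots> \<in> relsp Q"
  proof (rule relsp_sum)
    fix e assume e: "e \<in> Eset G2"
    have e': "(fst e, snd e) \<in> Eset G2" using e by simp
    let ?K = "mu_graph Q G1 (contr_graph Q G2 (fst e) (snd e))"
    have WK: "wf Q ?K" by (rule wf_mu[OF W1 wf_contr[OF W2 e']])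
    have ij: "vx G2 (fst e) < nv G2" "vx G2 (snd e) < nv G2" "vx G2 (fst e) \<noteq> vx G2 (snd e)"
      using e wf_vx[OF W2] by (auto simp: Eset_def)
    have nvK: "nv G1 < nv ?K" using ij by (simp add: mu_simps cg_simps)
    have cp: "cyc (nv G1) permutes {..<nv ?K}"
      by (rule permutes_subset[OF cyc_perm_sign[THEN conjunct1]]) (use nvK in auto)
    have r: "single (relabel Q (cyc (nv G1)) id ?K) - smult (of_int (sign (cyc (nv G1)) * sign (id :: nat \<Rightarrow> nat))) (single ?K) \<in> relsp Q"
      by (rule relsp_relabel[OF WK cp permutes_id])
    have sg: "(of_int (sign (cyc (nv G1)) * sign (id :: nat \<Rightarrow> nat)) :: rat) = (-1) ^ nv G1"
      using cyc_perm_sign[of "nv G1", THEN conjunct2] by simp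
    have "smult (?sg G2 e) (single (relabel Q (cyc (nv G1)) id ?K) - smult ((-1) ^ nv G1) (single ?K)) \<in> relsp Q"
      using relsp.scale[OF r] sg by simp
    then show "smult (?sg G2 e) (single (relabel Q (cyc (nv G1)) id ?K)) - smult ((-1) ^ nv G1) (smult (?sg G2 e) (single ?K)) \<in> relsp Q"
      by (simp add: smult_diff mult.commute)
  qed
  finally show ?thesis .
qed

end

definition mup :: "'q species \<Rightarrow> 'q chain \<Rightarrow> 'q chain \<Rightarrow> 'q chain" where
  "mup Q x y = lin (\<lambda>G1. lin (\<lambda>G2. smult ((-1) ^ nv G1) (single (mu_graph Q G1 G2))) y) x"

lemma mu_eq: "mu Q x y = lin (\<lambda>G1. lin (\<lambda>G2. single (mu_graph Q G1 G2)) y) x"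
  unfolding mu_def by (rule lin2_eq)

lemma fs_mu: "fs x \<Longrightarrow> fs y \<Longrightarrow> fs (mu Q x y)"
  unfolding mu_eq by (intro fs_lin) auto
lemma fs_mup: "fs x \<Longrightarrow> fs y \<Longrightarrow> fs (mup Q x y)"
  unfolding mup_def by (intro fs_lin) auto

lemma mu_diff_left: "fs a \<Longrightarrow> fs b \<Longrightarrow> mu Q (a - b) y = mu Q a y - mu Q b y"
  unfolding mu_eq by (rule lin_diff)
lemma mup_diff_right: "fs a \<Longrightarrow> fs b \<Longrightarrow> mup Q x (a - b) = mup Q x a - mup Q x b"
  unfolding mup_def by (simp add: lin_diff lin_fun_diff[symmetric])
lemma dE_diff: "fs a \<Longrightarrow> fs b \<Longrightarrow> dE Q (a - b) = dE Q a - dE Q b"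
  unfolding dE_def by (rule lin_diff)

lemma g1: "fs x \<Longrightarrow> fs y \<Longrightarrow> (\<And>G. fs (d G)) \<Longrightarrow> lin d (mu Q x y) = lin (\<lambda>G1. lin (\<lambda>G2. d (mu_graph Q G1 G2)) y) x"
  unfolding mu_eq by (simp add: lin_lin fs_lin)

lemma g2: "fs x \<Longrightarrow> fs y \<Longrightarrow> (\<And>G. fs (d G)) \<Longrightarrow>
   mu Q (lin d x) y = lin (\<lambda>G1. lin (\<lambda>G2. lin (\<lambda>G. single (mu_graph Q G G2)) (d G1)) y) x"
proof -
  assume x: "fs x" and y: "fs y" and d: "\<And>G. fs (d G)"
  have "mu Q (lin d x) y = lin (\<lambda>G1. lin (\<lambda>G. lin (\<lambda>G2. single (mu_graph Q G G2)) y) (d G1)) x"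
    unfolding mu_eq by (rule lin_lin[OF x d])
  also have "\<dots> = lin (\<lambda>G1. lin (\<lambda>G2. lin (\<lambda>G. single (mu_graph Q G G2)) (d G1)) y) x"
    by (rule lin_cong) (rule lin_swap[OF d y])
  finally show ?thesis .
qed

lemma g3: "fs x \<Longrightarrow> fs y \<Longrightarrow> (\<And>G. fs (d G)) \<Longrightarrow>
   mup Q x (lin d y) = lin (\<lambda>G1. lin (\<lambda>G2. smult ((-1) ^ nv G1) (lin (\<lambda>G'. single (mu_graph Q G1 G')) (d G2))) y) x"
  unfolding mup_def by (simp add: lin_lin lin_fun_smult)

lemma bg_eq: "bracket_graph Q G1 G2 = dH_graph Q (mu_graph Q G1 G2) - lin (\<lambda>G. single (mu_graph Q G G2)) (dH_graph Q G1)
   - smult ((-1) ^ nv G1) (lin (\<lambda>G'. single (mu_graph Q G1 G')) (dH_graph Q G2))"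
  unfolding bracket_graph_def dH_def mu_eq by (simp add: fs_dH_graph)

lemma bracket_expand: assumes "fs x" "fs y"
  shows "bracket Q x y = dH Q (mu Q x y) - mu Q (dH Q x) y - mup Q x (dH Q y)"
proof -
  have "bracket Q x y = lin (\<lambda>G1. lin (bracket_graph Q G1) y) x" unfolding bracket_def by (rule lin2_eq)
  also have "\<dots> = lin (\<lambda>G1. lin (\<lambda>G2. dH_graph Q (mu_graph Q G1 G2)) y) x
      - lin (\<lambda>G1. lin (\<lambda>G2. lin (\<lambda>G. single (mu_graph Q G G2)) (dH_graph Q G1)) y) x
      - lin (\<lambda>G1. lin (\<lambda>G2. smult ((-1) ^ nv G1) (lin (\<lambda>G'. single (mu_graph Q G1 G')) (dH_graph Q G2))) y) x"
    unfolding bg_eq by (simp only: lin_fun_diff)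
  also have "\<dots> = dH Q (mu Q x y) - mu Q (dH Q x) y - mup Q x (dH Q y)"
    unfolding dH_def g1[OF assms fs_dH_graph] g2[OF assms fs_dH_graph] g3[OF assms fs_dH_graph] ..
  finally show ?thesis .
qed

lemma leibniz_eq: assumes "fs u" "fs v"
  shows "dE Q (mu Q u v) - mu Q (dE Q u) v - mup Q u (dE Q v) = lin (\<lambda>G1. lin (\<lambda>G2. LD Q G1 G2) v) u"
  unfolding dE_def g1[OF assms fs_dE_graph] g2[OF assms fs_dE_graph] g3[OF assms fs_dE_graph] LD_def
  by (simp only: lin_fun_diff)

context ms
begin

lemma mu_gch: assumes x: "x \<in> gchains Q" and y: "y \<in> gchains Q" shows "mu Q x y \<in> gchains Q"
  unfolding mu_eq
  by (intro gchains_lin gchains_single wf_mu fs_lin gchains_fs[OF x] gchains_fs[OF y])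
     (auto intro: gchains_wf[OF x] gchains_wf[OF y])

lemma leibniz: assumes u: "u \<in> gchains Q" and v: "v \<in> gchains Q"
  shows "dE Q (mu Q u v) - mu Q (dE Q u) v - mup Q u (dE Q v) \<in> relsp Q"
  unfolding leibniz_eq[OF gchains_fs[OF u] gchains_fs[OF v]]
proof (rule relsp_lin[OF gchains_fs[OF u]])
  fix G1 assume g1: "u G1 \<noteq> 0"
  show "lin (LD Q G1) v \<in> relsp Q"
  proof (rule relsp_lin[OF gchains_fs[OF v]])
    fix G2 assume g2: "v G2 \<noteq> 0"
    show "LD Q G1 G2 \<in> relsp Q" by (rule LD_relsp[OF gchains_wf[OF u g1] gchains_wf[OF v g2]])
  qed
qed

lemma mu_relsp_left: assumes r: "r \<in> relsp Q" and v: "v \<in> gchains Q"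
  shows "mu Q r v \<in> relsp Q"
  unfolding mu_eq
proof (rule relsp_lin_relsp[OF r])
  show "fs (lin (\<lambda>G2. single (mu_graph Q G G2)) v)" for G by (rule fs_lin[OF gchains_fs[OF v]]) simp
  fix G \<sigma> \<tau> assume W: "wf Q G" and s: "\<sigma> permutes {..<nv G}" and t: "\<tau> permutes {..<nh G}"
  show "lin (\<lambda>G2. single (mu_graph Q G G2)) v - smult (of_int (sign \<sigma> * sign \<tau>)) (lin (\<lambda>G2. single (mu_graph Q (relabel Q \<sigma> \<tau> G) G2)) v) \<in> relsp Q"
    unfolding lin_fun_smult[symmetric] lin_fun_diff[symmetric]
  proof (rule relsp_lin[OF gchains_fs[OF v]])
    fix G2 assume "v G2 \<noteq> 0"
    then have W2: "wf Q G2" using gchains_wf[OF v] by blast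
    show "single (mu_graph Q G G2) - smult (of_int (sign \<sigma> * sign \<tau>)) (single (mu_graph Q (relabel Q \<sigma> \<tau> G) G2)) \<in> relsp Q"
      unfolding mu_relabel1[OF W W2 s t]
      by (rule relsp.gen[OF wf_mu[OF W W2]]) (use s t in \<open>auto simp: mu_simps intro: permutes_subset\<close>)
  qed
qed

lemma mup_relsp_right: assumes u: "u \<in> gchains Q" and r: "r \<in> relsp Q"
  shows "mup Q u r \<in> relsp Q"
  unfolding mup_def
proof (rule relsp_lin[OF gchains_fs[OF u]])
  fix G1 assume "u G1 \<noteq> 0"
  then have W1: "wf Q G1" using gchains_wf[OF u] by blast
  show "lin (\<lambda>G2. smult ((-1) ^ nv G1) (single (mu_graph Q G1 G2))) r \<in> relsp Q"
  proof (rule relsp_lin_relsp[OF r])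
    show "fs (smult ((-1) ^ nv G1) (single (mu_graph Q G1 G)))" for G by simp
    fix G \<sigma> \<tau> assume W: "wf Q G" and s: "\<sigma> permutes {..<nv G}" and t: "\<tau> permutes {..<nh G}"
    have ss: "shp (nv G1) \<sigma> permutes {..<nv (mu_graph Q G1 G)}" "sign (shp (nv G1) \<sigma>) = sign \<sigma>"
      using shp_perm_sign[OF s, of "nv G1"] by (simp_all add: mu_simps)
    have tt: "shp (nh G1) \<tau> permutes {..<nh (mu_graph Q G1 G)}" "sign (shp (nh G1) \<tau>) = sign \<tau>"
      using shp_perm_sign[OF t, of "nh G1"] by (simp_all add: mu_simps)
    have "single (mu_graph Q G1 G) - smult (of_int (sign (shp (nv G1) \<sigma>) * sign (shp (nh G1) \<tau>)))
       (single (relabel Q (shp (nv G1) \<sigma>) (shp (nh G1) \<tau>) (mu_graph Q G1 G))) \<in> relsp Q"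
      by (rule relsp.gen[OF wf_mu[OF W1 W] ss(1) tt(1)])
    then have "smult ((-1) ^ nv G1) (single (mu_graph Q G1 G) - smult (of_int (sign \<sigma> * sign \<tau>))
       (single (mu_graph Q G1 (relabel Q \<sigma> \<tau> G)))) \<in> relsp Q"
      unfolding mu_relabel2[OF W1 W s t] ss(2) tt(2) by (rule relsp.scale)
    then show "smult ((-1) ^ nv G1) (single (mu_graph Q G1 G)) - smult (of_int (sign \<sigma> * sign \<tau>))
       (smult ((-1) ^ nv G1) (single (mu_graph Q G1 (relabel Q \<sigma> \<tau> G)))) \<in> relsp Q"
      by (simp add: smult_diff mult.commute)
  qed
qed

end

context ms
begin

lemma part2:
  assumes x: "x \<in> gchains Q" and y: "y \<in> gchains Q" and cx: "dE Q x \<in> relsp Q" and cy: "dE Q y \<in> relsp Q"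
  shows "\<exists>z\<in>gchains Q. bracket Q x y - dE Q z \<in> relsp Q"
proof -
  let ?S = "lin S_graph" and ?D = "dE Q"
  have fx: "fs x" and fy: "fs y" using x y by (simp_all add: gchains_fs)
  have Sx: "?S x \<in> gchains Q" and Sy: "?S y \<in> gchains Q" using S_lin_gch x y by blast+
  have m: "mu Q x y \<in> gchains Q" by (rule mu_gch[OF x y])
  have Sm: "?S (mu Q x y) \<in> gchains Q" by (rule S_lin_gch[OF m])
  have m1: "mu Q (?S x) y \<in> gchains Q" by (rule mu_gch[OF Sx y])
  have m2: "mu Q x (?S y) \<in> gchains Q" by (rule mu_gch[OF x Sy])
  define z where "z = ?S (mu Q x y) - mu Q (?S x) y - mu Q x (?S y)"
  have z: "z \<in> gchains Q" unfolding z_def by (intro gchains_diff Sm m1 m2)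
  note F = gchains_fs
  have fSx: "fs (?S x)" "fs (?S y)" "fs (mu Q x y)" using Sx Sy m by (simp_all add: F)
  have fD: "fs (?D (?S x))" "fs (?D (?S y))" "fs (?S (?D x))" "fs (?S (?D y))" "fs (?D x)" "fs (?D y)"
    using fSx fx fy by (simp_all add: fs_dE fs_lin fs_S_graph)
  have Dz: "?D z = ?D (?S (mu Q x y)) - ?D (mu Q (?S x) y) - ?D (mu Q x (?S y))"
    unfolding z_def using Sm m1 m2 by (simp add: dE_diff F)
  have br: "bracket Q x y = dH Q (mu Q x y) - mu Q (dH Q x) y - mup Q x (dH Q y)" by (rule bracket_expand[OF fx fy])
  have Hm: "dH Q (mu Q x y) = ?D (?S (mu Q x y)) - ?S (?D (mu Q x y))" by (rule dH_DS[OF m])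
  have Hx: "mu Q (dH Q x) y = mu Q (?D (?S x)) y - mu Q (?S (?D x)) y"
    unfolding dH_DS[OF x] using fD by (simp add: mu_diff_left)
  have Hy: "mup Q x (dH Q y) = mup Q x (?D (?S y)) - mup Q x (?S (?D y))"
    unfolding dH_DS[OF y] using fD by (simp add: mup_diff_right)
  define L6 where "L6 = ?D (mu Q (?S x) y) - mu Q (?D (?S x)) y - mup Q (?S x) (?D y)"
  define L7 where "L7 = ?D (mu Q x (?S y)) - mu Q (?D x) (?S y) - mup Q x (?D (?S y))"
  define L8 where "L8 = ?D (mu Q x y) - mu Q (?D x) y - mup Q x (?D y)"
  have l6: "L6 \<in> relsp Q" unfolding L6_def by (rule leibniz[OF Sx y])
  have l7: "L7 \<in> relsp Q" unfolding L7_def by (rule leibniz[OF x Sy])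
  have l8: "L8 \<in> relsp Q" unfolding L8_def by (rule leibniz[OF x y])
  have r1: "mu Q (?D x) y \<in> relsp Q" by (rule mu_relsp_left[OF cx y])
  have r2: "mup Q x (?D y) \<in> relsp Q" by (rule mup_relsp_right[OF x cy])
  have Dm: "?D (mu Q x y) \<in> relsp Q"
  proof -
    have "?D (mu Q x y) = L8 + mu Q (?D x) y + mup Q x (?D y)" unfolding L8_def by simp
    then show ?thesis using l8 r1 r2 by (simp add: relsp.add)
  qed
  have r0: "?S (?D (mu Q x y)) \<in> relsp Q" by (rule S_relsp[OF Dm])
  have r3: "mu Q (?S (?D x)) y \<in> relsp Q" by (rule mu_relsp_left[OF S_relsp[OF cx] y])
  have r4: "mup Q x (?S (?D y)) \<in> relsp Q" by (rule mup_relsp_right[OF x S_relsp[OF cy]])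
  have r5: "mup Q (?S x) (?D y) \<in> relsp Q" by (rule mup_relsp_right[OF Sx cy])
  have r6: "mu Q (?D x) (?S y) \<in> relsp Q" by (rule mu_relsp_left[OF cx Sy])
  have eq: "bracket Q x y - ?D z = - ?S (?D (mu Q x y)) + mu Q (?S (?D x)) y + mup Q x (?S (?D y))
      + L6 + mup Q (?S x) (?D y) + L7 + mu Q (?D x) (?S y)"
    unfolding br Hm Hx Hy Dz L6_def L7_def by (simp add: algebra_simps)
  have "bracket Q x y - ?D z \<in> relsp Q"
    unfolding eq by (intro relsp.add relsp_neg r0 r3 r4 l6 r5 l7 r6)
  then show ?thesis using z by blast
qed

end

theorem propositionB1:
  fixes Q :: "'q species"
  assumes "mated_species Q"
  shows "(\<forall>x\<in>gchains Q. dE Q x \<in> relsp Q \<longrightarrow>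
            (\<exists>y\<in>gchains Q. dH Q x - dE Q y \<in> relsp Q))
       \<and> (\<forall>x\<in>gchains Q. \<forall>y\<in>gchains Q. dE Q x \<in> relsp Q \<longrightarrow> dE Q y \<in> relsp Q \<longrightarrow>
            (\<exists>z\<in>gchains Q. bracket Q x y - dE Q z \<in> relsp Q))"
proof -
  interpret ms Q by (rule ms.intro[OF assms])
  show ?thesis using part1 part2 by blast
qed

end
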